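(* Let $n\ge4$ and assume hypothesis $(\mathrm A_{n-1})$. Let $T$ be an irreducible finite dimensional representation of $U'_q(\mathrm{so}_n)$. Then the restriction of $T$ to the subalgebra $U'_q(\mathrm{so}_{n-1})$ is completely reducible, and either all of its irreducible components are of the form $T_{\mathbf m_{n-1}}$ (classical type) or all of them are of the form $T_{\epsilon,\mathbf m_{n-1}}$ (nonclassical type).
   Context: Notation. Fix $q\in\mathbb C\setminus\{0\}$, not a root of unity, with a choice of $q^{1/2}$. Put $[a]=\frac{q^a-q^{-a}}{q-q^{-1}}$, $[a]_+=\frac{q^a+q^{-a}}{q-q^{-1}}$. The algebra. For $n\ge 3$, $U'_q(\mathrm{so}_n)$ is the complex unital associative algebra generated by $I_{21},\dots,I_{n,n-1}$ with relations, for $2\le i\le n-1$: $I_{i,i-1}^2I_{i+1,i}-(q+q^{-1})I_{i,i-1}I_{i+1,i}I_{i,i-1}+I_{i+1,i}I_{i,i-1}^2=-I_{i+1,i}$; $I_{i,i-1}I_{i+1,i}^2-(q+q^{-1})I_{i+1,i}I_{i,i-1}I_{i+1,i}+I_{i+1,i}^2I_{i,i-1}=-I_{i,i-1}$; and $I_{i,i-1}I_{j,j-1}=I_{j,j-1}I_{i,i-1}$ for $|i-j|>1$. The subalgebra of $U'_q(\mathrm{so}_n)$ generated by $I_{21},\dots,I_{n-1,n-2}$ is identified with $U'_q(\mathrm{so}_{n-1})$. Gel'fand–Tsetlin conventions. For $\mathbf m_s=(m_{1,s},\dots,m_{\lfloor s/2\rfloor,s})$ put $l_{j,2p+1}=m_{j,2p+1}+p-j+1$,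 $l_{j,2p}=m_{j,2p}+p-j$. A tableau for $U'_q(\mathrm{so}_N)$ is $\alpha=(\mathbf m_N,\dots,\mathbf m_2)$ with $\mathbf m_N$ fixed and entries differing from those of $\mathbf m_N$ by integers; $\alpha^{\pm j}_s$ is $\alpha$ with $m_{j,s}$ replaced by $m_{j,s}\pm1$; $|\beta\rangle=0$ if $\beta$ is not admissible. Classical type $T_{\mathbf m_N}$ (representation of $U'_q(\mathrm{so}_N)$). $\mathbf m_N$ has $\lfloor N/2\rfloor$ entries, all integers or all half-odd-integers, with $m_{1,2k+1}\ge\dots\ge m_{k,2k+1}\ge0$ ($N=2k+1$), $m_{1,2k}\ge\dots\ge m_{k-1,2k}\ge|m_{k,2k}|$ ($N=2k$). Basis $|\alpha\rangle$ over tableaux with $m_{1,2p+1}\ge m_{1,2p}\ge\dots\ge m_{p,2p+1}\ge m_{p,2p}\ge -m_{p,2p+1}$ and $m_{1,2p}\ge m_{1,2p-1}\ge\dots\ge m_{p-1,2p-1}\ge|m_{p,2p}|$. Action: $T(I_{2p+1,2p})|\alpha\rangle=\sum_{j=1}^p\frac{A^j_{2p}(\alpha)}{a(l_{j,2p})}|\alpha^{+j}_{2p}\rangle-\sum_{j=1}^p\frac{A^j_{2p}(\alpha^{-j}_{2p})}{a(l_{j,2p}-1)}|\alpha^{-j}_{2p}\rangle$, $T(I_{2p,2p-1})|\alpha\rangle=\sum_{j=1}^{p-1}\frac{B^j_{2p-1}(\alpha)}{b(l_{j,2p-1})[l_{j,2p-1}]}|\alpha^{+j}_{2p-1}\rangle-\sum_{j=1}^{p-1}\frac{B^j_{2p-1}(\alpha^{-j}_{2p-1})}{b(l_{j,2p-1}-1)[l_{j,2p-1}-1]}|\alpha^{-j}_{2p-1}\rangle+\mathrm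 i\,C_{2p-1}(\alpha)|\alpha\rangle$, $A^j_{2p}=\Big(\frac{\prod_{i=1}^p[l_{i,2p+1}+l_{j,2p}][l_{i,2p+1}-l_{j,2p}-1]\prod_{i=1}^{p-1}[l_{i,2p-1}+l_{j,2p}][l_{i,2p-1}-l_{j,2p}-1]}{\prod_{i\ne j}[l_{i,2p}+l_{j,2p}][l_{i,2p}-l_{j,2p}][l_{i,2p}+l_{j,2p}+1][l_{i,2p}-l_{j,2p}-1]}\Big)^{1/2}$, $B^j_{2p-1}=\Big(\frac{\prod_{i=1}^p[l_{i,2p}+l_{j,2p-1}][l_{i,2p}-l_{j,2p-1}]\prod_{i=1}^{p-1}[l_{i,2p-2}+l_{j,2p-1}][l_{i,2p-2}-l_{j,2p-1}]}{\prod_{i\ne j}^{p-1}[l_{i,2p-1}+l_{j,2p-1}][l_{i,2p-1}-l_{j,2p-1}][l_{i,2p-1}+l_{j,2p-1}-1][l_{i,2p-1}-l_{j,2p-1}-1]}\Big)^{1/2}$, $C_{2p-1}=\frac{\prod_{s=1}^p[l_{s,2p}]\prod_{s=1}^{p-1}[l_{s,2p-2}]}{\prod_{s=1}^{p-1}[l_{s,2p-1}][l_{s,2p-1}-1]}$, $a(l)=\{(q^{l+1}+q^{-l-1})(q^l+q^{-l})\}^{1/2}$, $b(l)=([2l+1][2l-1])^{1/2}$. Nonclassical type $T_{\epsilon,\mathbf m_N}$. $\epsilon=(\epsilon_2,\dots,\epsilon_N)\in\{\pm1\}^{N-1}$, $\mathbf m_N$ half-odd-integers with $m_{1,N}\ge\dots\ge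 m_{\lfloor N/2\rfloor,N}\ge\frac12$. Basis over tableaux with $m_{1,2p+1}\ge m_{1,2p}\ge\dots\ge m_{p,2p+1}\ge m_{p,2p}\ge\frac12$ and $m_{1,2p}\ge m_{1,2p-1}\ge\dots\ge m_{p-1,2p-1}\ge m_{p,2p}$. Action: $T(I_{2p+1,2p})|\alpha\rangle=\delta_{m_{p,2p},1/2}\frac{\epsilon_{2p+1}}{q^{1/2}-q^{-1/2}}D_{2p}(\alpha)|\alpha\rangle+\sum_{j=1}^p\frac{A^j_{2p}(\alpha)}{a'(l_{j,2p})}|\alpha^{+j}_{2p}\rangle-\sum_j\frac{A^j_{2p}(\alpha^{-j}_{2p})}{a'(l_{j,2p}-1)}|\alpha^{-j}_{2p}\rangle$ (last sum over $j\le p$, or $j\le p-1$ if $m_{p,2p}=\frac12$), $T(I_{2p,2p-1})|\alpha\rangle=\sum_{j=1}^{p-1}\frac{B^j_{2p-1}(\alpha)}{b(l_{j,2p-1})[l_{j,2p-1}]_+}|\alpha^{+j}_{2p-1}\rangle-\sum_{j=1}^{p-1}\frac{B^j_{2p-1}(\alpha^{-j}_{2p-1})}{b(l_{j,2p-1}-1)[l_{j,2p-1}-1]_+}|\alpha^{-j}_{2p-1}\rangle+\epsilon_{2p}\hat C_{2p-1}(\alpha)|\alpha\rangle$, $a'(l)=\{(q^{l+1}-q^{-l-1})(q^l-q^{-l})\}^{1/2}$, $\hat C_{2p-1}=\frac{\prod_{s=1}^p[l_{s,2p}]_+\prod_{s=1}^{p-1}[l_{s,2p-2}]_+}{\prod_{s=1}^{p-1}[l_{s,2p-1}]_+[l_{s,2p-1}-1]_+}$,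 $D_{2p}=\frac{\prod_{i=1}^p[l_{i,2p+1}-\frac12]\prod_{i=1}^{p-1}[l_{i,2p-1}-\frac12]}{\prod_{i=1}^{p-1}[l_{i,2p}+\frac12][l_{i,2p}-\frac12]}$. Hypothesis $(\mathrm A_{n-1})$: every finite dimensional representation of $U'_q(\mathrm{so}_{n-1})$ is completely reducible, and every irreducible finite dimensional representation of $U'_q(\mathrm{so}_{n-1})$ is equivalent to some $T_{\mathbf m_{n-1}}$ or some $T_{\epsilon,\mathbf m_{n-1}}$. *)

theory Defs
  imports Complex_Main
begin

text \<open>A representation of U'_q(so_N) is given by a finite basis index set S and,
for each k in {2..N}, the matrix rho k of the generator I_{k,k-1}; the entry rho k b a is
the coefficient of the basis vector b in the image of the basis vector a. The parameter h is the chosen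
square root q^(1/2) of q, so q = h^2.\<close>

definition vecs :: "'i set \<Rightarrow> ('i \<Rightarrow> complex) set" where
  "vecs S = {v. \<forall>x. x \<notin> S \<longrightarrow> v x = 0}"

definition act :: "'i set \<Rightarrow> ('i \<Rightarrow> 'i \<Rightarrow> complex) \<Rightarrow> ('i \<Rightarrow> complex) \<Rightarrow> ('i \<Rightarrow> complex)" where
  "act S A v = (\<lambda>b. if b \<in> S then (\<Sum>a\<in>S. A b a * v a) else 0)"

definition csubspace :: "('i \<Rightarrow> complex) set \<Rightarrow> bool" where
  "csubspace W \<longleftrightarrow> (\<lambda>_. 0) \<in> W \<and> (\<forall>u\<in>W. \<forall>v\<in>W. (\<lambda>x. u x + v x) \<in> W)
      \<and> (\<forall>c. \<forall>u\<in>W. (\<lambda>x. c * u x) \<in> W)"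

definition is_rep :: "complex \<Rightarrow> nat \<Rightarrow> 'i set \<Rightarrow> (nat \<Rightarrow> 'i \<Rightarrow> 'i \<Rightarrow> complex) \<Rightarrow> bool" where
  "is_rep h N S \<rho> \<longleftrightarrow> finite S \<and>
    (\<forall>i\<in>{2..N-1}. \<forall>v\<in>vecs S.
       (\<lambda>x. act S (\<rho> i) (act S (\<rho> i) (act S (\<rho> (i+1)) v)) x
          - (h^2 + inverse (h^2)) * act S (\<rho> i) (act S (\<rho> (i+1)) (act S (\<rho> i) v)) x
          + act S (\<rho> (i+1)) (act S (\<rho> i) (act S (\<rho> i) v)) x)
       = (\<lambda>x. - act S (\<rho> (i+1)) v x)
     \<and>
       (\<lambda>x. act S (\<rho> i) (act S (\<rho> (i+1)) (act S (\<rho> (i+1)) v)) x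
          - (h^2 + inverse (h^2)) * act S (\<rho> (i+1)) (act S (\<rho> i) (act S (\<rho> (i+1)) v)) x
          + act S (\<rho> (i+1)) (act S (\<rho> (i+1)) (act S (\<rho> i) v)) x)
       = (\<lambda>x. - act S (\<rho> i) v x)) \<and>
    (\<forall>i\<in>{2..N}. \<forall>j\<in>{2..N}. (i > j + 1 \<or> j > i + 1) \<longrightarrow>
       (\<forall>v\<in>vecs S. act S (\<rho> i) (act S (\<rho> j) v) = act S (\<rho> j) (act S (\<rho> i) v)))"

definition inv_subspace :: "'i set \<Rightarrow> (nat \<Rightarrow> 'i \<Rightarrow> 'i \<Rightarrow> complex) \<Rightarrow> nat set \<Rightarrow> ('i \<Rightarrow> complex) set \<Rightarrow> bool" where
  "inv_subspace S \<rho> K W \<longleftrightarrow> W \<subseteq> vecs S \<and> csubspace W \<and>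
     (\<forall>k\<in>K. \<forall>w\<in>W. act S (\<rho> k) w \<in> W)"

definition irred_sub :: "'i set \<Rightarrow> (nat \<Rightarrow> 'i \<Rightarrow> 'i \<Rightarrow> complex) \<Rightarrow> nat set \<Rightarrow> ('i \<Rightarrow> complex) set \<Rightarrow> bool" where
  "irred_sub S \<rho> K W \<longleftrightarrow> inv_subspace S \<rho> K W \<and> W \<noteq> {\<lambda>_. 0} \<and>
     (\<forall>U. inv_subspace S \<rho> K U \<and> U \<subseteq> W \<longrightarrow> U = {\<lambda>_. 0} \<or> U = W)"

definition irred_decomp :: "'i set \<Rightarrow> (nat \<Rightarrow> 'i \<Rightarrow> 'i \<Rightarrow> complex) \<Rightarrow> nat set \<Rightarrow> nat \<Rightarrow> (nat \<Rightarrow> ('i \<Rightarrow> complex) set) \<Rightarrow> bool" where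
  "irred_decomp S \<rho> K r W \<longleftrightarrow> (\<forall>i<r. irred_sub S \<rho> K (W i)) \<and>
     (\<forall>v\<in>vecs S. \<exists>!w. (\<forall>i<r. w i \<in> W i) \<and> (\<forall>i\<ge>r. w i = (\<lambda>_. 0)) \<and> v = (\<lambda>x. \<Sum>i<r. w i x))"

definition completely_reducible :: "'i set \<Rightarrow> (nat \<Rightarrow> 'i \<Rightarrow> 'i \<Rightarrow> complex) \<Rightarrow> nat set \<Rightarrow> bool" where
  "completely_reducible S \<rho> K \<longleftrightarrow> (\<exists>r W. irred_decomp S \<rho> K r W)"

text \<open>The subrepresentation on the invariant subspace W of (S, rho), restricted to the
generators of U'_q(so_N'), is equivalent to the representation (S', rho') of U'_q(so_N').\<close>
definition equiv_sub :: "'i set \<Rightarrow> (nat \<Rightarrow> 'i \<Rightarrow> 'i \<Rightarrow> complex) \<Rightarrow> ('i \<Rightarrow> complex) set \<Rightarrow> nat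
     \<Rightarrow> 'j set \<Rightarrow> (nat \<Rightarrow> 'j \<Rightarrow> 'j \<Rightarrow> complex) \<Rightarrow> bool" where
  "equiv_sub S \<rho> W N' S' \<rho>' \<longleftrightarrow> (\<exists>\<phi>.
     (\<forall>u\<in>vecs S'. \<forall>v\<in>vecs S'. \<phi> (\<lambda>x. u x + v x) = (\<lambda>x. \<phi> u x + \<phi> v x)) \<and>
     (\<forall>c. \<forall>u\<in>vecs S'. \<phi> (\<lambda>x. c * u x) = (\<lambda>x. c * \<phi> u x)) \<and>
     bij_betw \<phi> (vecs S') W \<and>
     (\<forall>k\<in>{2..N'}. \<forall>u\<in>vecs S'. \<phi> (act S' (\<rho>' k) u) = act S (\<rho> k) (\<phi> u)))"

section \<open>Gel'fand-Tsetlin tableaux (entries doubled, so that they are integers)\<close>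

text \<open>A tableau t : t s j = 2 m_{j,s} for 2 <= s <= N, 1 <= j <= s div 2, and 0 elsewhere.
M j = 2 m_{j,N}. Lval t s j = 2 l_{j,s}.\<close>

type_synonym tableau = "nat \<Rightarrow> nat \<Rightarrow> int"

definition Lval :: "tableau \<Rightarrow> nat \<Rightarrow> nat \<Rightarrow> int" where
  "Lval t s j = t s j + (if odd s then 2 * (int (s div 2) - int j + 1) else 2 * (int (s div 2) - int j))"

definition tplus :: "tableau \<Rightarrow> nat \<Rightarrow> nat \<Rightarrow> tableau" where
  "tplus t s j = t(s := (t s)(j := t s j + 2))"

definition tminus :: "tableau \<Rightarrow> nat \<Rightarrow> nat \<Rightarrow> tableau" where
  "tminus t s j = t(s := (t s)(j := t s j - 2))"

definition tab_shape :: "nat \<Rightarrow> (nat \<Rightarrow> int) \<Rightarrow> tableau \<Rightarrow> bool" where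
  "tab_shape N M t \<longleftrightarrow>
     (\<forall>s j. \<not> (2 \<le> s \<and> s \<le> N \<and> 1 \<le> j \<and> j \<le> s div 2) \<longrightarrow> t s j = 0) \<and>
     (\<forall>j\<in>{1..N div 2}. t N j = M j) \<and>
     (\<forall>s\<in>{2..N}. \<forall>j\<in>{1..s div 2}. \<forall>i\<in>{1..N div 2}. even (t s j - M i))"

definition cl_hw :: "nat \<Rightarrow> (nat \<Rightarrow> int) \<Rightarrow> bool" where
  "cl_hw N M \<longleftrightarrow> (let k = N div 2 in
     ((\<forall>j\<in>{1..k}. even (M j)) \<or> (\<forall>j\<in>{1..k}. odd (M j))) \<and>
     (if odd N then (\<forall>j\<in>{1..k-1}. M j \<ge> M (j+1)) \<and> M k \<ge> 0
      else (\<forall>j. 1 \<le> j \<and> j + 1 < k \<longrightarrow> M j \<ge> M (j+1)) \<and> M (k-1) \<ge> \<bar>M k\<bar>))"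

definition nc_hw :: "nat \<Rightarrow> (nat \<Rightarrow> int) \<Rightarrow> bool" where
  "nc_hw N M \<longleftrightarrow> (let k = N div 2 in
     (\<forall>j\<in>{1..k}. odd (M j)) \<and> (\<forall>j\<in>{1..k-1}. M j \<ge> M (j+1)) \<and> M k \<ge> 1)"

definition GT_cl :: "nat \<Rightarrow> (nat \<Rightarrow> int) \<Rightarrow> tableau set" where
  "GT_cl N M = {t. tab_shape N M t \<and>
     (\<forall>s\<in>{3..N}. odd s \<longrightarrow> (let p = s div 2 in
        (\<forall>j\<in>{1..p}. t s j \<ge> t (s-1) j) \<and> (\<forall>j\<in>{1..p-1}. t (s-1) j \<ge> t s (j+1)) \<and>
        t (s-1) p \<ge> - t s p)) \<and>
     (\<forall>s\<in>{2..N}. even s \<longrightarrow> (let p = s div 2 in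
        (\<forall>j\<in>{1..p-1}. t s j \<ge> t (s-1) j) \<and> (\<forall>j. 1 \<le> j \<and> j + 1 < p \<longrightarrow> t (s-1) j \<ge> t s (j+1)) \<and>
        (p \<ge> 2 \<longrightarrow> t (s-1) (p-1) \<ge> \<bar>t s p\<bar>)))}"

definition GT_nc :: "nat \<Rightarrow> (nat \<Rightarrow> int) \<Rightarrow> tableau set" where
  "GT_nc N M = {t. tab_shape N M t \<and>
     (\<forall>s\<in>{3..N}. odd s \<longrightarrow> (let p = s div 2 in
        (\<forall>j\<in>{1..p}. t s j \<ge> t (s-1) j) \<and> (\<forall>j\<in>{1..p-1}. t (s-1) j \<ge> t s (j+1)) \<and>
        t (s-1) p \<ge> 1)) \<and>
     (\<forall>s\<in>{2..N}. even s \<longrightarrow> (let p = s div 2 in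
        (\<forall>j\<in>{1..p-1}. t s j \<ge> t (s-1) j) \<and> (\<forall>j. 1 \<le> j \<and> j + 1 < p \<longrightarrow> t (s-1) j \<ge> t s (j+1)) \<and>
        (p \<ge> 2 \<longrightarrow> t (s-1) (p-1) \<ge> t s p)))}"

section \<open>q-numbers (arguments doubled: qn h x = [x/2], with q^(x/2) = h^x)\<close>

definition qn :: "complex \<Rightarrow> int \<Rightarrow> complex" where
  "qn h x = (h powi x - h powi (-x)) / (h^2 - h powi (-2))"

definition qp :: "complex \<Rightarrow> int \<Rightarrow> complex" where
  "qp h x = (h powi x + h powi (-x)) / (h^2 - h powi (-2))"

text \<open>a(l), a'(l), b(l) with argument L = 2l; square roots are principal (csqrt).\<close>
definition acl :: "complex \<Rightarrow> int \<Rightarrow> complex" where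
  "acl h L = csqrt ((h powi (L+2) + h powi (-L-2)) * (h powi L + h powi (-L)))"

definition anc :: "complex \<Rightarrow> int \<Rightarrow> complex" where
  "anc h L = csqrt ((h powi (L+2) - h powi (-L-2)) * (h powi L - h powi (-L)))"

definition bq :: "complex \<Rightarrow> int \<Rightarrow> complex" where
  "bq h L = csqrt (qn h (2*L+2) * qn h (2*L-2))"

definition Acoef :: "complex \<Rightarrow> nat \<Rightarrow> nat \<Rightarrow> tableau \<Rightarrow> complex" where
  "Acoef h r j t = (let p = r div 2; L = Lval t in csqrt (
     ((\<Prod>i\<in>{1..p}. qn h (L (r+1) i + L r j) * qn h (L (r+1) i - L r j - 2)) *
      (\<Prod>i\<in>{1..p-1}. qn h (L (r-1) i + L r j) * qn h (L (r-1) i - L r j - 2)))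
     / (\<Prod>i\<in>{1..p}-{j}. qn h (L r i + L r j) * qn h (L r i - L r j)
                         * qn h (L r i + L r j + 2) * qn h (L r i - L r j - 2))))"

definition Bcoef :: "complex \<Rightarrow> nat \<Rightarrow> nat \<Rightarrow> tableau \<Rightarrow> complex" where
  "Bcoef h r j t = (let p = (r+1) div 2; L = Lval t in csqrt (
     ((\<Prod>i\<in>{1..p}. qn h (L (r+1) i + L r j) * qn h (L (r+1) i - L r j)) *
      (\<Prod>i\<in>{1..p-1}. qn h (L (r-1) i + L r j) * qn h (L (r-1) i - L r j)))
     / (\<Prod>i\<in>{1..p-1}-{j}. qn h (L r i + L r j) * qn h (L r i - L r j)
                         * qn h (L r i + L r j - 2) * qn h (L r i - L r j - 2))))"

text \<open>C_{r}(t) for r = 2p-1 (f = qn), and hat C_{r}(t) (f = qp).\<close>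
definition Ccoef :: "(int \<Rightarrow> complex) \<Rightarrow> nat \<Rightarrow> tableau \<Rightarrow> complex" where
  "Ccoef f r t = (let p = (r+1) div 2; L = Lval t in
     ((\<Prod>s\<in>{1..p}. f (L (r+1) s)) * (\<Prod>s\<in>{1..p-1}. f (L (r-1) s)))
     / (\<Prod>s\<in>{1..p-1}. f (L r s) * f (L r s - 2)))"

definition Dcoef :: "complex \<Rightarrow> nat \<Rightarrow> tableau \<Rightarrow> complex" where
  "Dcoef h r t = (let p = r div 2; L = Lval t in
     ((\<Prod>i\<in>{1..p}. qn h (L (r+1) i - 1)) * (\<Prod>i\<in>{1..p-1}. qn h (L (r-1) i - 1)))
     / (\<Prod>i\<in>{1..p-1}. qn h (L r i + 1) * qn h (L r i - 1)))"

text \<open>Matrix of the generator I_{k,k-1} (which changes row r = k-1); entry (b, a) is the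
coefficient of |b> in T(I_{k,k-1})|a>.\<close>
definition T_cl :: "complex \<Rightarrow> nat \<Rightarrow> tableau \<Rightarrow> tableau \<Rightarrow> complex" where
  "T_cl h k b a = (let r = k - 1 in
     if even r then (let p = r div 2 in
        (\<Sum>j\<in>{1..p}. if b = tplus a r j then Acoef h r j a / acl h (Lval a r j) else 0)
      - (\<Sum>j\<in>{1..p}. if b = tminus a r j
           then Acoef h r j (tminus a r j) / acl h (Lval a r j - 2) else 0))
     else (let p = (r+1) div 2 in
        (\<Sum>j\<in>{1..p-1}. if b = tplus a r j
           then Bcoef h r j a / (bq h (Lval a r j) * qn h (Lval a r j)) else 0)
      - (\<Sum>j\<in>{1..p-1}. if b = tminus a r j
           then Bcoef h r j (tminus a r j) / (bq h (Lval a r j - 2) * qn h (Lval a r j - 2)) else 0)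
      + (if b = a then \<i> * Ccoef (qn h) r a else 0)))"

definition T_nc :: "complex \<Rightarrow> (nat \<Rightarrow> int) \<Rightarrow> nat \<Rightarrow> tableau \<Rightarrow> tableau \<Rightarrow> complex" where
  "T_nc h eps k b a = (let r = k - 1 in
     if even r then (let p = r div 2 in
        (if b = a \<and> a r p = 1 then of_int (eps (r+1)) / (h - inverse h) * Dcoef h r a else 0)
      + (\<Sum>j\<in>{1..p}. if b = tplus a r j then Acoef h r j a / anc h (Lval a r j) else 0)
      - (\<Sum>j\<in>{1..(if a r p = 1 then p - 1 else p)}. if b = tminus a r j
           then Acoef h r j (tminus a r j) / anc h (Lval a r j - 2) else 0))
     else (let p = (r+1) div 2 in
        (\<Sum>j\<in>{1..p-1}. if b = tplus a r j
           then Bcoef h r j a / (bq h (Lval a r j) * qp h (Lval a r j)) else 0)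
      - (\<Sum>j\<in>{1..p-1}. if b = tminus a r j
           then Bcoef h r j (tminus a r j) / (bq h (Lval a r j - 2) * qp h (Lval a r j - 2)) else 0)
      + (if b = a then of_int (eps (r+1)) * Ccoef (qp h) r a else 0)))"

definition eps_ok :: "nat \<Rightarrow> (nat \<Rightarrow> int) \<Rightarrow> bool" where
  "eps_ok N eps \<longleftrightarrow> (\<forall>k\<in>{2..N}. eps k = 1 \<or> eps k = -1)"

definition classical_type :: "complex \<Rightarrow> nat \<Rightarrow> 'i set \<Rightarrow> (nat \<Rightarrow> 'i \<Rightarrow> 'i \<Rightarrow> complex) \<Rightarrow> ('i \<Rightarrow> complex) set \<Rightarrow> bool" where
  "classical_type h N S \<rho> W \<longleftrightarrow>
     (\<exists>M. cl_hw N M \<and> equiv_sub S \<rho> W N (GT_cl N M) (T_cl h))"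

definition nonclassical_type :: "complex \<Rightarrow> nat \<Rightarrow> 'i set \<Rightarrow> (nat \<Rightarrow> 'i \<Rightarrow> 'i \<Rightarrow> complex) \<Rightarrow> ('i \<Rightarrow> complex) set \<Rightarrow> bool" where
  "nonclassical_type h N S \<rho> W \<longleftrightarrow>
     (\<exists>eps M. eps_ok N eps \<and> nc_hw N M \<and> equiv_sub S \<rho> W N (GT_nc N M) (T_nc h eps))"

text \<open>Hypothesis (A_N) (used with N = n-1). Every finite dimensional representation is
equivalent to one on a finite set of natural-number basis indices.\<close>
definition hypA :: "complex \<Rightarrow> nat \<Rightarrow> bool" where
  "hypA h N \<longleftrightarrow> (\<forall>(S :: nat set) \<rho>. is_rep h N S \<rho> \<longrightarrow>
      completely_reducible S \<rho> {2..N} \<and>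
      (irred_sub S \<rho> {2..N} (vecs S) \<longrightarrow>
         classical_type h N S \<rho> (vecs S) \<or> nonclassical_type h N S \<rho> (vecs S)))"

end

theory Submission
  imports Defs
begin

definition lin_on :: "'j set \<Rightarrow> (('j \<Rightarrow> complex) \<Rightarrow> ('i \<Rightarrow> complex)) \<Rightarrow> bool" where
  "lin_on S' \<phi> \<longleftrightarrow> (\<forall>u\<in>vecs S'. \<forall>v\<in>vecs S'. \<phi> (\<lambda>x. u x + v x) = (\<lambda>x. \<phi> u x + \<phi> v x)) \<and>
     (\<forall>c. \<forall>u\<in>vecs S'. \<phi> (\<lambda>x. c * u x) = (\<lambda>x. c * \<phi> u x))"

definition dl :: "'j \<Rightarrow> 'j \<Rightarrow> complex" where "dl a = (\<lambda>x. if x = a then 1 else 0)"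

definition intertw :: "'j set \<Rightarrow> (nat \<Rightarrow> 'j \<Rightarrow> 'j \<Rightarrow> complex) \<Rightarrow> 'i set \<Rightarrow> (nat \<Rightarrow> 'i \<Rightarrow> 'i \<Rightarrow> complex)
   \<Rightarrow> nat set \<Rightarrow> (('j \<Rightarrow> complex) \<Rightarrow> ('i \<Rightarrow> complex)) \<Rightarrow> bool" where
  "intertw S' A' S A K \<phi> \<longleftrightarrow> lin_on S' \<phi> \<and> inj_on \<phi> (vecs S') \<and> \<phi> ` vecs S' \<subseteq> vecs S \<and>
     (\<forall>k\<in>K. \<forall>u\<in>vecs S'. \<phi> (act S' (A' k) u) = act S (A k) (\<phi> u))"

lemma vecs_zero[simp]: "(\<lambda>_. 0) \<in> vecs S" by (simp add: vecs_def)
lemma vecs_add[simp]: "u \<in> vecs S \<Longrightarrow> v \<in> vecs S \<Longrightarrow> (\<lambda>x. u x + v x) \<in> vecs S" by (simp add: vecs_def)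
lemma vecs_diff[simp]: "u \<in> vecs S \<Longrightarrow> v \<in> vecs S \<Longrightarrow> (\<lambda>x. u x - v x) \<in> vecs S" by (simp add: vecs_def)
lemma vecs_scale[simp]: "u \<in> vecs S \<Longrightarrow> (\<lambda>x. c * u x) \<in> vecs S" by (simp add: vecs_def)
lemma vecs_neg[simp]: "u \<in> vecs S \<Longrightarrow> (\<lambda>x. - u x) \<in> vecs S" by (simp add: vecs_def)
lemma vecs_sum: "(\<And>i. i \<in> I \<Longrightarrow> w i \<in> vecs S) \<Longrightarrow> (\<lambda>x. \<Sum>i\<in>I. w i x) \<in> vecs S"
  by (auto simp: vecs_def intro!: sum.neutral)
lemma dl_vecs: "a \<in> S \<Longrightarrow> dl a \<in> vecs S" by (simp add: vecs_def dl_def)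
lemma act_vecs[simp]: "act S A u \<in> vecs S" by (simp add: vecs_def act_def)
lemma act_add: "act S A (\<lambda>x. u x + v x) = (\<lambda>x. act S A u x + act S A v x)"
  by (auto simp: act_def sum.distrib distrib_left)
lemma act_scale: "act S A (\<lambda>x. c * u x) = (\<lambda>x. c * act S A u x)"
  by (auto simp: act_def sum_distrib_left ac_simps)
lemma act_zero[simp]: "act S A (\<lambda>_. 0) = (\<lambda>_. 0)"
  by (auto simp: act_def)
lemma act_sum: "act S A (\<lambda>x. \<Sum>i\<in>I. w i x) = (\<lambda>x. \<Sum>i\<in>I. act S A (w i) x)"
proof (rule ext)
  fix b show "act S A (\<lambda>x. \<Sum>i\<in>I. w i x) b = (\<Sum>i\<in>I. act S A (w i) b)"
    by (cases "b \<in> S") (auto simp: act_def sum_distrib_left intro: sum.swap)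
qed
lemma act_infinite: "infinite S \<Longrightarrow> act S A u = (\<lambda>_. 0)"
  by (auto simp: act_def)

lemma vecs_expand: "finite S \<Longrightarrow> u \<in> vecs S \<Longrightarrow> u = (\<lambda>x. \<Sum>a\<in>S. u a * dl a x)"
proof (rule ext)
  fix x assume "finite S" "u \<in> vecs S"
  have "(\<Sum>a\<in>S. u a * dl a x) = (\<Sum>a\<in>S. if a = x then u x else 0)"
    by (rule sum.cong) (auto simp: dl_def)
  also have "\<dots> = u x" using \<open>finite S\<close> \<open>u \<in> vecs S\<close> by (simp add: vecs_def)
  finally show "u x = (\<Sum>a\<in>S. u a * dl a x)" by simp
qed

lemma lin_add: "lin_on S' \<phi> \<Longrightarrow> u \<in> vecs S' \<Longrightarrow> v \<in> vecs S' \<Longrightarrow> \<phi> (\<lambda>x. u x + v x) = (\<lambda>x. \<phi> u x + \<phi> v x)"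
  by (simp add: lin_on_def)
lemma lin_scale: "lin_on S' \<phi> \<Longrightarrow> u \<in> vecs S' \<Longrightarrow> \<phi> (\<lambda>x. c * u x) = (\<lambda>x. c * \<phi> u x)"
  by (simp add: lin_on_def)
lemma lin_zero: "lin_on S' \<phi> \<Longrightarrow> \<phi> (\<lambda>_. 0) = (\<lambda>_. 0)"
  using lin_scale[of S' \<phi> "\<lambda>_. 0" 0] by simp
lemma lin_neg: "lin_on S' \<phi> \<Longrightarrow> u \<in> vecs S' \<Longrightarrow> \<phi> (\<lambda>x. - u x) = (\<lambda>x. - \<phi> u x)"
  using lin_scale[of S' \<phi> u "-1"] by simp
lemma lin_diff: "lin_on S' \<phi> \<Longrightarrow> u \<in> vecs S' \<Longrightarrow> v \<in> vecs S' \<Longrightarrow> \<phi> (\<lambda>x. u x - v x) = (\<lambda>x. \<phi> u x - \<phi> v x)"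
  using lin_add[of S' \<phi> u "\<lambda>x. - v x"] lin_neg[of S' \<phi> v] by simp
lemma lin_sum: "lin_on S' \<phi> \<Longrightarrow> (\<And>i. i \<in> I \<Longrightarrow> w i \<in> vecs S') \<Longrightarrow>
    \<phi> (\<lambda>x. \<Sum>i\<in>I. w i x) = (\<lambda>x. \<Sum>i\<in>I. \<phi> (w i) x)"
proof (induction I rule: infinite_finite_induct)
  case (infinite A) then show ?case by (simp add: lin_zero)
next
  case empty then show ?case by (simp add: lin_zero)
next
  case (insert a F)
  have "\<phi> (\<lambda>x. \<Sum>i\<in>insert a F. w i x) = \<phi> (\<lambda>x. w a x + (\<lambda>x. \<Sum>i\<in>F. w i x) x)"
    using insert by simp
  also have "\<dots> = (\<lambda>x. \<phi> (w a) x + \<phi> (\<lambda>x. \<Sum>i\<in>F. w i x) x)"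
    using insert by (intro lin_add) (auto intro: vecs_sum)
  finally show ?case using insert by simp
qed

lemma csub_zero: "csubspace W \<Longrightarrow> (\<lambda>_. 0) \<in> W" by (simp add: csubspace_def)
lemma csub_add: "csubspace W \<Longrightarrow> u \<in> W \<Longrightarrow> v \<in> W \<Longrightarrow> (\<lambda>x. u x + v x) \<in> W" by (simp add: csubspace_def)
lemma csub_scale: "csubspace W \<Longrightarrow> u \<in> W \<Longrightarrow> (\<lambda>x. c * u x) \<in> W" by (simp add: csubspace_def)
lemma csub_diff: "csubspace W \<Longrightarrow> u \<in> W \<Longrightarrow> v \<in> W \<Longrightarrow> (\<lambda>x. u x - v x) \<in> W"
  using csub_add[of W u "\<lambda>x. (-1) * v x"] csub_scale[of W v "-1"] by simp
lemma csub_sum: "csubspace W \<Longrightarrow> (\<And>i. i \<in> I \<Longrightarrow> w i \<in> W) \<Longrightarrow> (\<lambda>x. \<Sum>i\<in>I. w i x) \<in> W"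
proof (induction I rule: infinite_finite_induct)
  case (infinite A) then show ?case by (simp add: csub_zero)
next
  case empty then show ?case by (simp add: csub_zero)
next
  case (insert a F)
  then show ?case using csub_add[of W "w a" "\<lambda>x. \<Sum>i\<in>F. w i x"] by simp
qed
lemma csub_vecs: "csubspace (vecs S)" by (simp add: csubspace_def)

lemma is_rep_restrict: "is_rep h n S \<rho> \<Longrightarrow> is_rep h (n - 1) S \<rho>"
  unfolding is_rep_def by (auto simp del: One_nat_def)

lemma intertw_rel1:
  assumes it: "intertw S' A' S A K \<phi>" and k: "i \<in> K" "i + 1 \<in> K" and v: "v \<in> vecs S'"
  shows "\<phi> (\<lambda>x. act S' (A' i) (act S' (A' i) (act S' (A' (i+1)) v)) x
          - c * act S' (A' i) (act S' (A' (i+1)) (act S' (A' i) v)) x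
          + act S' (A' (i+1)) (act S' (A' i) (act S' (A' i) v)) x)
    = (\<lambda>x. act S (A i) (act S (A i) (act S (A (i+1)) (\<phi> v))) x
          - c * act S (A i) (act S (A (i+1)) (act S (A i) (\<phi> v))) x
          + act S (A (i+1)) (act S (A i) (act S (A i) (\<phi> v))) x)"
proof -
  have L: "lin_on S' \<phi>" and I: "\<And>k u. k \<in> K \<Longrightarrow> u \<in> vecs S' \<Longrightarrow> \<phi> (act S' (A' k) u) = act S (A k) (\<phi> u)"
    using it by (auto simp: intertw_def)
  define a where "a = act S' (A' i) (act S' (A' i) (act S' (A' (i+1)) v))"
  define b where "b = act S' (A' i) (act S' (A' (i+1)) (act S' (A' i) v))"
  define d where "d = act S' (A' (i+1)) (act S' (A' i) (act S' (A' i) v))"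
  have ab: "a \<in> vecs S'" "b \<in> vecs S'" "d \<in> vecs S'" by (simp_all add: a_def b_def d_def)
  have "\<phi> (\<lambda>x. a x - c * b x + d x) = (\<lambda>x. \<phi> (\<lambda>x. a x - c * b x) x + \<phi> d x)"
    using ab by (intro lin_add[OF L]) auto
  also have "\<phi> (\<lambda>x. a x - c * b x) = (\<lambda>x. \<phi> a x - \<phi> (\<lambda>x. c * b x) x)"
    using ab by (intro lin_diff[OF L]) auto
  also have "\<phi> (\<lambda>x. c * b x) = (\<lambda>x. c * \<phi> b x)"
    using ab by (intro lin_scale[OF L]) auto
  finally have e: "\<phi> (\<lambda>x. a x - c * b x + d x) = (\<lambda>x. \<phi> a x - c * \<phi> b x + \<phi> d x)" by simp
  have "\<phi> a = act S (A i) (act S (A i) (act S (A (i+1)) (\<phi> v)))"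
    unfolding a_def using k v by (simp add: I)
  moreover have "\<phi> b = act S (A i) (act S (A (i+1)) (act S (A i) (\<phi> v)))"
    unfolding b_def using k v by (simp add: I)
  moreover have "\<phi> d = act S (A (i+1)) (act S (A i) (act S (A i) (\<phi> v)))"
    unfolding d_def using k v by (simp add: I)
  ultimately show ?thesis using e unfolding a_def b_def d_def by simp
qed

lemma intertw_rel2:
  assumes it: "intertw S' A' S A K \<phi>" and k: "i \<in> K" "i + 1 \<in> K" and v: "v \<in> vecs S'"
  shows "\<phi> (\<lambda>x. act S' (A' i) (act S' (A' (i+1)) (act S' (A' (i+1)) v)) x
          - c * act S' (A' (i+1)) (act S' (A' i) (act S' (A' (i+1)) v)) x
          + act S' (A' (i+1)) (act S' (A' (i+1)) (act S' (A' i) v)) x)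
    = (\<lambda>x. act S (A i) (act S (A (i+1)) (act S (A (i+1)) (\<phi> v))) x
          - c * act S (A (i+1)) (act S (A i) (act S (A (i+1)) (\<phi> v))) x
          + act S (A (i+1)) (act S (A (i+1)) (act S (A i) (\<phi> v))) x)"
proof -
  have L: "lin_on S' \<phi>" and I: "\<And>k u. k \<in> K \<Longrightarrow> u \<in> vecs S' \<Longrightarrow> \<phi> (act S' (A' k) u) = act S (A k) (\<phi> u)"
    using it by (auto simp: intertw_def)
  define a where "a = act S' (A' i) (act S' (A' (i+1)) (act S' (A' (i+1)) v))"
  define b where "b = act S' (A' (i+1)) (act S' (A' i) (act S' (A' (i+1)) v))"
  define d where "d = act S' (A' (i+1)) (act S' (A' (i+1)) (act S' (A' i) v))"
  have ab: "a \<in> vecs S'" "b \<in> vecs S'" "d \<in> vecs S'" by (simp_all add: a_def b_def d_def)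
  have "\<phi> (\<lambda>x. a x - c * b x + d x) = (\<lambda>x. \<phi> (\<lambda>x. a x - c * b x) x + \<phi> d x)"
    using ab by (intro lin_add[OF L]) auto
  also have "\<phi> (\<lambda>x. a x - c * b x) = (\<lambda>x. \<phi> a x - \<phi> (\<lambda>x. c * b x) x)"
    using ab by (intro lin_diff[OF L]) auto
  also have "\<phi> (\<lambda>x. c * b x) = (\<lambda>x. c * \<phi> b x)"
    using ab by (intro lin_scale[OF L]) auto
  finally have e: "\<phi> (\<lambda>x. a x - c * b x + d x) = (\<lambda>x. \<phi> a x - c * \<phi> b x + \<phi> d x)" by simp
  have "\<phi> a = act S (A i) (act S (A (i+1)) (act S (A (i+1)) (\<phi> v)))"
    unfolding a_def using k v by (simp add: I)
  moreover have "\<phi> b = act S (A (i+1)) (act S (A i) (act S (A (i+1)) (\<phi> v)))"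
    unfolding b_def using k v by (simp add: I)
  moreover have "\<phi> d = act S (A (i+1)) (act S (A (i+1)) (act S (A i) (\<phi> v)))"
    unfolding d_def using k v by (simp add: I)
  ultimately show ?thesis using e unfolding a_def b_def d_def by simp
qed

lemma is_rep_transport:
  assumes rep: "is_rep h N S A" and it: "intertw S' A' S A {2..N} \<phi>" and fin: "finite S'"
  shows "is_rep h N S' A'"
proof -
  have L: "lin_on S' \<phi>" and inj: "inj_on \<phi> (vecs S')" and im: "\<And>u. u \<in> vecs S' \<Longrightarrow> \<phi> u \<in> vecs S"
    and I: "\<And>k u. k \<in> {2..N} \<Longrightarrow> u \<in> vecs S' \<Longrightarrow> \<phi> (act S' (A' k) u) = act S (A k) (\<phi> u)"
    using it by (auto simp: intertw_def)
  have R1: "\<And>i v. i \<in> {2..N-1} \<Longrightarrow> v \<in> vecs S \<Longrightarrow>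
       (\<lambda>x. act S (A i) (act S (A i) (act S (A (i+1)) v)) x
          - (h^2 + inverse (h^2)) * act S (A i) (act S (A (i+1)) (act S (A i) v)) x
          + act S (A (i+1)) (act S (A i) (act S (A i) v)) x)
       = (\<lambda>x. - act S (A (i+1)) v x)"
   and R2: "\<And>i v. i \<in> {2..N-1} \<Longrightarrow> v \<in> vecs S \<Longrightarrow>
       (\<lambda>x. act S (A i) (act S (A (i+1)) (act S (A (i+1)) v)) x
          - (h^2 + inverse (h^2)) * act S (A (i+1)) (act S (A i) (act S (A (i+1)) v)) x
          + act S (A (i+1)) (act S (A (i+1)) (act S (A i) v)) x)
       = (\<lambda>x. - act S (A i) v x)"
   and R3: "\<And>i j v. i \<in> {2..N} \<Longrightarrow> j \<in> {2..N} \<Longrightarrow> (i > j + 1 \<or> j > i + 1) \<Longrightarrow> v \<in> vecs S \<Longrightarrow>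
       act S (A i) (act S (A j) v) = act S (A j) (act S (A i) v)"
    using rep unfolding is_rep_def by blast+
  show ?thesis unfolding is_rep_def
  proof (intro conjI ballI allI impI)
    show "finite S'" by (rule fin)
  next
    fix i v assume i: "i \<in> {2..N-1}" and v: "v \<in> vecs S'"
    have k: "i \<in> {2..N}" "i+1 \<in> {2..N}" using i by auto
    have "\<phi> (\<lambda>x. act S' (A' i) (act S' (A' i) (act S' (A' (i+1)) v)) x
          - (h^2 + inverse (h^2)) * act S' (A' i) (act S' (A' (i+1)) (act S' (A' i) v)) x
          + act S' (A' (i+1)) (act S' (A' i) (act S' (A' i) v)) x) = \<phi> (\<lambda>x. - act S' (A' (i+1)) v x)"
      unfolding intertw_rel1[OF it k v] R1[OF i im[OF v]] lin_neg[OF L act_vecs] I[OF k(2) v] ..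
    then show "(\<lambda>x. act S' (A' i) (act S' (A' i) (act S' (A' (i+1)) v)) x
          - (h^2 + inverse (h^2)) * act S' (A' i) (act S' (A' (i+1)) (act S' (A' i) v)) x
          + act S' (A' (i+1)) (act S' (A' i) (act S' (A' i) v)) x) = (\<lambda>x. - act S' (A' (i+1)) v x)"
      by (rule inj_onD[OF inj]) auto
  next
    fix i v assume i: "i \<in> {2..N-1}" and v: "v \<in> vecs S'"
    have k: "i \<in> {2..N}" "i+1 \<in> {2..N}" using i by auto
    have "\<phi> (\<lambda>x. act S' (A' i) (act S' (A' (i+1)) (act S' (A' (i+1)) v)) x
          - (h^2 + inverse (h^2)) * act S' (A' (i+1)) (act S' (A' i) (act S' (A' (i+1)) v)) x
          + act S' (A' (i+1)) (act S' (A' (i+1)) (act S' (A' i) v)) x) = \<phi> (\<lambda>x. - act S' (A' i) v x)"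
      unfolding intertw_rel2[OF it k v] R2[OF i im[OF v]] lin_neg[OF L act_vecs] I[OF k(1) v] ..
    then show "(\<lambda>x. act S' (A' i) (act S' (A' (i+1)) (act S' (A' (i+1)) v)) x
          - (h^2 + inverse (h^2)) * act S' (A' (i+1)) (act S' (A' i) (act S' (A' (i+1)) v)) x
          + act S' (A' (i+1)) (act S' (A' (i+1)) (act S' (A' i) v)) x) = (\<lambda>x. - act S' (A' i) v x)"
      by (rule inj_onD[OF inj]) auto
  next
    fix i j v assume i: "i \<in> {2..N}" and j: "j \<in> {2..N}" and ij: "j + 1 < i \<or> i + 1 < j" and v: "v \<in> vecs S'"
    have "\<phi> (act S' (A' i) (act S' (A' j) v)) = act S (A i) (act S (A j) (\<phi> v))"
      using I[OF i act_vecs] I[OF j v] by simp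
    also have "\<dots> = act S (A j) (act S (A i) (\<phi> v))"
      by (rule R3[OF i j ij im[OF v]])
    also have "\<dots> = \<phi> (act S' (A' j) (act S' (A' i) v))"
      using I[OF j act_vecs] I[OF i v] by simp
    finally have "\<phi> (act S' (A' i) (act S' (A' j) v)) = \<phi> (act S' (A' j) (act S' (A' i) v))" .
    then show "act S' (A' i) (act S' (A' j) v) = act S' (A' j) (act S' (A' i) v)"
      by (rule inj_onD[OF inj]) auto
  qed
qed

lemma irred_transport:
  assumes irr: "irred_sub S A K W" and it: "intertw S' A' S A K \<phi>" and im: "\<phi> ` vecs S' = W"
  shows "irred_sub S' A' K (vecs S')"
proof -
  have L: "lin_on S' \<phi>" and inj: "inj_on \<phi> (vecs S')"
    and I: "\<And>k u. k \<in> K \<Longrightarrow> u \<in> vecs S' \<Longrightarrow> \<phi> (act S' (A' k) u) = act S (A k) (\<phi> u)"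
    using it by (auto simp: intertw_def)
  have W: "inv_subspace S A K W" "W \<noteq> {\<lambda>_. 0}"
    and Wm: "\<And>U. inv_subspace S A K U \<Longrightarrow> U \<subseteq> W \<Longrightarrow> U = {\<lambda>_. 0} \<or> U = W"
    using irr unfolding irred_sub_def by blast+
  have invV: "inv_subspace S' A' K (vecs S')"
    by (simp add: inv_subspace_def csub_vecs)
  have ne: "vecs S' \<noteq> {\<lambda>_. 0}"
  proof
    assume "vecs S' = {\<lambda>_. 0}"
    then have "W = {\<lambda>_. 0}" using im lin_zero[OF L] by auto
    then show False using W by simp
  qed
  have "U = {\<lambda>_. 0} \<or> U = vecs S'" if U: "inv_subspace S' A' K U" "U \<subseteq> vecs S'" for U
  proof -
    have cU: "csubspace U" and Uk: "\<And>k w. k \<in> K \<Longrightarrow> w \<in> U \<Longrightarrow> act S' (A' k) w \<in> U"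
      using U unfolding inv_subspace_def by blast+
    have "inv_subspace S A K (\<phi> ` U)"
      unfolding inv_subspace_def csubspace_def
    proof (intro conjI ballI allI)
      have "\<phi> ` U \<subseteq> W" using im U(2) by auto
      then show "\<phi> ` U \<subseteq> vecs S" using W(1) by (auto simp: inv_subspace_def)
      show "(\<lambda>_. 0) \<in> \<phi> ` U" using imageI[OF csub_zero[OF cU], of \<phi>] by (simp add: lin_zero[OF L])
    next
      fix a b assume "a \<in> \<phi> ` U" "b \<in> \<phi> ` U"
      then obtain u v where "u \<in> U" "v \<in> U" "a = \<phi> u" "b = \<phi> v" by auto
      then show "(\<lambda>x. a x + b x) \<in> \<phi> ` U"
      proof -
        have "\<phi> (\<lambda>x. u x + v x) \<in> \<phi> ` U" using csub_add[OF cU \<open>u \<in> U\<close> \<open>v \<in> U\<close>] by blast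
        moreover have "\<phi> (\<lambda>x. u x + v x) = (\<lambda>x. a x + b x)"
          using lin_add[OF L, of u v] U(2) \<open>u \<in> U\<close> \<open>v \<in> U\<close> \<open>a = \<phi> u\<close> \<open>b = \<phi> v\<close> by auto
        ultimately show ?thesis by simp
      qed
    next
      fix c a assume "a \<in> \<phi> ` U"
      then obtain u where "u \<in> U" "a = \<phi> u" by auto
      then show "(\<lambda>x. c * a x) \<in> \<phi> ` U"
      proof -
        have "\<phi> (\<lambda>x. c * u x) \<in> \<phi> ` U" using csub_scale[OF cU \<open>u \<in> U\<close>] by blast
        moreover have "\<phi> (\<lambda>x. c * u x) = (\<lambda>x. c * a x)"
          using lin_scale[OF L, of u c] U(2) \<open>u \<in> U\<close> \<open>a = \<phi> u\<close> by auto
        ultimately show ?thesis by simp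
      qed
    next
      fix k a assume "k \<in> K" "a \<in> \<phi> ` U"
      then obtain u where "u \<in> U" "a = \<phi> u" by auto
      then show "act S (A k) a \<in> \<phi> ` U"
      proof -
        have "\<phi> (act S' (A' k) u) \<in> \<phi> ` U" using Uk[OF \<open>k \<in> K\<close> \<open>u \<in> U\<close>] by blast
        moreover have "\<phi> (act S' (A' k) u) = act S (A k) a"
          using I[OF \<open>k \<in> K\<close>, of u] U(2) \<open>u \<in> U\<close> \<open>a = \<phi> u\<close> by auto
        ultimately show ?thesis by simp
      qed
    qed
    moreover have "\<phi> ` U \<subseteq> W" using im U(2) by auto
    ultimately have "\<phi> ` U = {\<lambda>_. 0} \<or> \<phi> ` U = W" using Wm by blast
    then show ?thesis
    proof
      assume a: "\<phi> ` U = {\<lambda>_. 0}"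
      have "U \<subseteq> {\<lambda>_. 0}"
      proof
        fix u assume "u \<in> U"
        then have "\<phi> u = \<phi> (\<lambda>_. 0)" using a lin_zero[OF L] by auto
        then show "u \<in> {\<lambda>_. 0}" using inj_onD[OF inj] U(2) \<open>u \<in> U\<close> by auto
      qed
      then show ?thesis using csub_zero[OF cU] by auto
    next
      assume a: "\<phi> ` U = W"
      have "vecs S' \<subseteq> U"
      proof
        fix u assume "u \<in> vecs S'"
        then have "\<phi> u \<in> \<phi> ` U" using a im by auto
        then obtain v where "v \<in> U" "\<phi> u = \<phi> v" by auto
        then show "u \<in> U" using inj_onD[OF inj] U(2) \<open>u \<in> vecs S'\<close> by auto
      qed
      then show ?thesis using U(2) by auto
    qed
  qed
  then show ?thesis using invV ne unfolding irred_sub_def by blast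
qed

lemma equiv_compose:
  assumes e: "equiv_sub S' A' (vecs S') N S'' B" and it: "intertw S' A' S A {2..N} \<psi>" and im: "\<psi> ` vecs S' = W"
  shows "equiv_sub S A W N S'' B"
proof -
  have L: "lin_on S' \<psi>" and inj: "inj_on \<psi> (vecs S')"
    and I: "\<And>k u. k \<in> {2..N} \<Longrightarrow> u \<in> vecs S' \<Longrightarrow> \<psi> (act S' (A' k) u) = act S (A k) (\<psi> u)"
    using it by (auto simp: intertw_def)
  obtain \<phi> where p1: "\<forall>u\<in>vecs S''. \<forall>v\<in>vecs S''. \<phi> (\<lambda>x. u x + v x) = (\<lambda>x. \<phi> u x + \<phi> v x)"
    and p2: "\<forall>c. \<forall>u\<in>vecs S''. \<phi> (\<lambda>x. c * u x) = (\<lambda>x. c * \<phi> u x)"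
    and p3: "bij_betw \<phi> (vecs S'') (vecs S')"
    and p4: "\<forall>k\<in>{2..N}. \<forall>u\<in>vecs S''. \<phi> (act S'' (B k) u) = act S' (A' k) (\<phi> u)"
    using e unfolding equiv_sub_def by blast
  have pin: "\<And>u. u \<in> vecs S'' \<Longrightarrow> \<phi> u \<in> vecs S'" using p3 by (auto simp: bij_betw_def)
  have bij2: "bij_betw \<psi> (vecs S') W" using inj im by (simp add: bij_betw_def)
  show ?thesis unfolding equiv_sub_def
  proof (intro exI[of _ "\<psi> \<circ> \<phi>"] conjI ballI allI)
    fix u v assume "u \<in> vecs S''" "v \<in> vecs S''"
    then show "(\<psi> \<circ> \<phi>) (\<lambda>x. u x + v x) = (\<lambda>x. (\<psi> \<circ> \<phi>) u x + (\<psi> \<circ> \<phi>) v x)"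
      using p1 lin_add[OF L] pin by simp
  next
    fix c u assume "u \<in> vecs S''"
    then show "(\<psi> \<circ> \<phi>) (\<lambda>x. c * u x) = (\<lambda>x. c * (\<psi> \<circ> \<phi>) u x)"
      using p2 lin_scale[OF L] pin by simp
  next
    show "bij_betw (\<psi> \<circ> \<phi>) (vecs S'') W" using bij_betw_trans[OF p3 bij2] .
  next
    fix k u assume "k \<in> {2..N}" "u \<in> vecs S''"
    then show "(\<psi> \<circ> \<phi>) (act S'' (B k) u) = act S (A k) ((\<psi> \<circ> \<phi>) u)"
      using p4 I pin by simp
  qed
qed

lemma exists_coord:
  fixes S :: "'i set" and A :: "nat \<Rightarrow> 'i \<Rightarrow> 'i \<Rightarrow> complex"
  assumes fin: "finite S" and inv: "inv_subspace S A K W"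
  shows "\<exists>T (A' :: nat \<Rightarrow> 'i \<Rightarrow> 'i \<Rightarrow> complex) \<psi>. T \<subseteq> S \<and> finite T \<and> intertw T A' S A K \<psi> \<and> \<psi> ` vecs T = W"
proof -
  have WS: "W \<subseteq> vecs S" and cW: "csubspace W" and Wk: "\<And>k w. k \<in> K \<Longrightarrow> w \<in> W \<Longrightarrow> act S (A k) w \<in> W"
    using inv unfolding inv_subspace_def by blast+
  define P where "P T \<longleftrightarrow> T \<subseteq> S \<and> (\<forall>g\<in>vecs T. \<exists>w\<in>W. \<forall>x\<in>T. w x = g x)" for T
  have P0: "P {}" unfolding P_def using csub_zero[OF cW] by auto
  have Pb: "\<forall>T. P T \<longrightarrow> card T < card S + 1"
  proof (intro allI impI)
    fix T assume "P T"
    then have "T \<subseteq> S" by (simp add: P_def)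
    then have "card T \<le> card S" by (rule card_mono[OF fin])
    then show "card T < card S + 1" by simp
  qed
  obtain T where PT: "P T" and mx: "\<forall>T'. P T' \<longrightarrow> card T' \<le> card T"
    using ex_has_greatest_nat[of P "{}" card "card S + 1", OF P0 Pb] by blast
  have TS: "T \<subseteq> S" using PT by (simp add: P_def)
  have finT: "finite T" using TS fin finite_subset by blast
  have zero: "w = (\<lambda>_. 0)" if w: "w \<in> W" "\<forall>x\<in>T. w x = 0" for w
  proof (rule ccontr)
    assume "w \<noteq> (\<lambda>_. 0)"
    then obtain x0 where x0: "w x0 \<noteq> 0" by auto
    have x0T: "x0 \<notin> T" using x0 w by auto
    have x0S: "x0 \<in> S" using x0 w WS by (auto simp: vecs_def)
    have "P (insert x0 T)" unfolding P_def
    proof (intro conjI ballI)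
      show "insert x0 T \<subseteq> S" using TS x0S by auto
    next
      fix g assume g: "g \<in> vecs (insert x0 T)"
      define g' where "g' = (\<lambda>x. if x \<in> T then g x else 0)"
      have "g' \<in> vecs T" by (simp add: g'_def vecs_def)
      then obtain u where u: "u \<in> W" "\<forall>x\<in>T. u x = g' x" using PT by (auto simp: P_def)
      define c where "c = (g x0 - u x0) / w x0"
      have F1: "(\<lambda>x. u x + c * w x) \<in> W" using csub_add[OF cW u(1) csub_scale[OF cW w(1)]] .
      have F2: "\<forall>x\<in>insert x0 T. u x + c * w x = g x"
      proof
        fix x assume "x \<in> insert x0 T"
        then show "u x + c * w x = g x"
        proof
          assume "x = x0" then show ?thesis using x0 by (simp add: c_def field_simps)
        next
          assume "x \<in> T" then show ?thesis using u w by (simp add: g'_def)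
        qed
      qed
      show "\<exists>w\<in>W. \<forall>x\<in>insert x0 T. w x = g x"
        by (rule bexI[of _ "\<lambda>x. u x + c * w x"]) (use F1 F2 in simp_all)
    qed
    then have "card (insert x0 T) \<le> card T" using mx by simp
    then show False using finT x0T by simp
  qed
  have uniq: "w = w'" if "w \<in> W" "w' \<in> W" "\<forall>x\<in>T. w x = w' x" for w w'
  proof -
    have "(\<lambda>x. w x - w' x) = (\<lambda>_. 0)" using zero[OF csub_diff[OF cW that(1,2)]] that(3) by simp
    then show ?thesis by (simp add: fun_eq_iff)
  qed
  define \<psi> where "\<psi> g = (THE w. w \<in> W \<and> (\<forall>x\<in>T. w x = g x))" for g
  have psi: "\<psi> g \<in> W \<and> (\<forall>x\<in>T. \<psi> g x = g x)" if gT: "g \<in> vecs T" for g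
  proof -
    obtain w where w: "w \<in> W" "\<forall>x\<in>T. w x = g x" using PT gT by (auto simp: P_def)
    show ?thesis unfolding \<psi>_def
      by (rule theI[of _ w]) (use w in \<open>auto intro!: uniq\<close>)
  qed
  have psi_char: "\<psi> g = w" if "g \<in> vecs T" "w \<in> W" "\<forall>x\<in>T. w x = g x" for g w
    using uniq[of "\<psi> g" w] psi[OF that(1)] that by auto
  have psiS: "\<psi> g \<in> vecs S" if "g \<in> vecs T" for g using psi[OF that] WS by auto
  have L: "lin_on T \<psi>" unfolding lin_on_def
  proof (intro conjI ballI allI)
    fix u v assume "u \<in> vecs T" "v \<in> vecs T"
    then show "\<psi> (\<lambda>x. u x + v x) = (\<lambda>x. \<psi> u x + \<psi> v x)"
      using psi[of u] psi[of v] by (intro psi_char csub_add[OF cW]) auto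
  next
    fix c u assume "u \<in> vecs T"
    then show "\<psi> (\<lambda>x. c * u x) = (\<lambda>x. c * \<psi> u x)"
      using psi[of u] by (intro psi_char csub_scale[OF cW]) auto
  qed
  have inj: "inj_on \<psi> (vecs T)"
  proof (rule inj_onI)
    fix u v assume uv: "u \<in> vecs T" "v \<in> vecs T" "\<psi> u = \<psi> v"
    show "u = v"
    proof (rule ext)
      fix x show "u x = v x"
      proof (cases "x \<in> T")
        case True then show ?thesis using psi[OF uv(1)] psi[OF uv(2)] uv(3) by auto
      next
        case False then show ?thesis using uv by (simp add: vecs_def)
      qed
    qed
  qed
  define A' where "A' k b a = act S (A k) (\<psi> (dl a)) b" for k b a
  have expand: "\<psi> u = (\<lambda>x. \<Sum>a\<in>T. u a * \<psi> (dl a) x)" if "u \<in> vecs T" for u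
  proof -
    have "\<psi> u = \<psi> (\<lambda>x. \<Sum>a\<in>T. u a * dl a x)" using arg_cong[OF vecs_expand[OF finT that], of \<psi>] .
    also have "\<dots> = (\<lambda>x. \<Sum>a\<in>T. \<psi> (\<lambda>y. u a * dl a y) x)"
      by (rule lin_sum[OF L]) (simp add: vecs_scale dl_vecs)
    also have "\<dots> = (\<lambda>x. \<Sum>a\<in>T. u a * \<psi> (dl a) x)"
      using lin_scale[OF L dl_vecs] by simp
    finally show ?thesis .
  qed
  have I: "\<psi> (act T (A' k) u) = act S (A k) (\<psi> u)" if k: "k \<in> K" and u: "u \<in> vecs T" for k u
  proof (rule psi_char)
    show "act T (A' k) u \<in> vecs T" by simp
    show "act S (A k) (\<psi> u) \<in> W" using Wk[OF k] psi[OF u] by blast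
    show "\<forall>x\<in>T. act S (A k) (\<psi> u) x = act T (A' k) u x"
    proof
      fix x assume x: "x \<in> T"
      have "act S (A k) (\<psi> u) = act S (A k) (\<lambda>x. \<Sum>a\<in>T. u a * \<psi> (dl a) x)" using arg_cong[OF expand[OF u], of "act S (A k)"] .
      also have "\<dots> = (\<lambda>x. \<Sum>a\<in>T. act S (A k) (\<lambda>y. u a * \<psi> (dl a) y) x)" by (rule act_sum)
      also have "\<dots> = (\<lambda>x. \<Sum>a\<in>T. u a * A' k x a)" by (simp add: act_scale A'_def)
      finally show "act S (A k) (\<psi> u) x = act T (A' k) u x" using x by (simp add: act_def mult.commute)
    qed
  qed
  have im: "\<psi> ` vecs T = W"
  proof
    show "\<psi> ` vecs T \<subseteq> W" using psi by auto
    show "W \<subseteq> \<psi> ` vecs T"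
    proof
      fix w assume w: "w \<in> W"
      define g where "g = (\<lambda>x. if x \<in> T then w x else 0)"
      have g: "g \<in> vecs T" by (simp add: g_def vecs_def)
      have "\<psi> g = w" using psi_char[OF g w] by (simp add: g_def)
      then show "w \<in> \<psi> ` vecs T" using g by blast
    qed
  qed
  have "intertw T A' S A K \<psi>" unfolding intertw_def using L inj psiS I by auto
  then show ?thesis using TS finT im by blast
qed

lemma component_type:
  fixes S :: "nat set" and \<rho> :: "nat \<Rightarrow> nat \<Rightarrow> nat \<Rightarrow> complex"
  assumes fin: "finite S" and rep: "is_rep h N S \<rho>" and hA: "hypA h N" and irr: "irred_sub S \<rho> {2..N} W"
  shows "classical_type h N S \<rho> W \<or> nonclassical_type h N S \<rho> W"
proof -
  have inv: "inv_subspace S \<rho> {2..N} W" using irr by (simp add: irred_sub_def)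
  obtain T :: "nat set" and A' :: "nat \<Rightarrow> nat \<Rightarrow> nat \<Rightarrow> complex" and \<psi> where
    T: "T \<subseteq> S" "finite T" "intertw T A' S \<rho> {2..N} \<psi>" "\<psi> ` vecs T = W"
    using exists_coord[OF fin inv] by blast
  have repT: "is_rep h N T A'" using is_rep_transport[OF rep T(3) T(2)] .
  have irrT: "irred_sub T A' {2..N} (vecs T)" using irred_transport[OF irr T(3) T(4)] .
  have "classical_type h N T A' (vecs T) \<or> nonclassical_type h N T A' (vecs T)"
    using hA repT irrT unfolding hypA_def by blast
  then show ?thesis
  proof
    assume "classical_type h N T A' (vecs T)"
    then obtain M where "cl_hw N M" "equiv_sub T A' (vecs T) N (GT_cl N M) (T_cl h)"
      by (auto simp: classical_type_def)
    then show ?thesis using equiv_compose[OF _ T(3) T(4)] by (auto simp: classical_type_def)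
  next
    assume "nonclassical_type h N T A' (vecs T)"
    then obtain eps M where "eps_ok N eps" "nc_hw N M" "equiv_sub T A' (vecs T) N (GT_nc N M) (T_nc h eps)"
      by (auto simp: nonclassical_type_def)
    then show ?thesis using equiv_compose[OF _ T(3) T(4)] by (auto simp: nonclassical_type_def)
  qed
qed

lemma equiv_fin:
  assumes e: "equiv_sub S A W N S' B" and irr: "irred_sub S A {2..N} W"
  shows "finite S'"
proof (rule ccontr)
  assume inf: "infinite S'"
  obtain \<phi> where p1: "\<forall>u\<in>vecs S'. \<forall>v\<in>vecs S'. \<phi> (\<lambda>x. u x + v x) = (\<lambda>x. \<phi> u x + \<phi> v x)"
    and p2: "\<forall>c. \<forall>u\<in>vecs S'. \<phi> (\<lambda>x. c * u x) = (\<lambda>x. c * \<phi> u x)"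
    and p3: "bij_betw \<phi> (vecs S') W"
    and p4: "\<forall>k\<in>{2..N}. \<forall>u\<in>vecs S'. \<phi> (act S' (B k) u) = act S (A k) (\<phi> u)"
    using e unfolding equiv_sub_def by blast
  have L: "lin_on S' \<phi>" using p1 p2 by (simp add: lin_on_def)
  have inj: "inj_on \<phi> (vecs S')" and im: "\<phi> ` vecs S' = W" using p3 by (auto simp: bij_betw_def)
  have W: "inv_subspace S A {2..N} W" "W \<noteq> {\<lambda>_. 0}"
    and Wm: "\<And>U. inv_subspace S A {2..N} U \<Longrightarrow> U \<subseteq> W \<Longrightarrow> U = {\<lambda>_. 0} \<or> U = W"
    using irr unfolding irred_sub_def by blast+
  have cW: "csubspace W" and WS: "W \<subseteq> vecs S" using W(1) by (auto simp: inv_subspace_def)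
  have kill: "act S (A k) w = (\<lambda>_. 0)" if kk: "k \<in> {2..N}" and ww: "w \<in> W" for k w
  proof -
    obtain u where "u \<in> vecs S'" "w = \<phi> u" using ww im by auto
    then have "act S (A k) w = \<phi> (act S' (B k) u)" using p4 kk by simp
    also have "\<dots> = (\<lambda>_. 0)" using act_infinite[OF inf] lin_zero[OF L] by simp
    finally show ?thesis .
  qed
  obtain w0 where w0: "w0 \<in> W" "w0 \<noteq> (\<lambda>_. 0)" using W(2) csub_zero[OF cW] by blast
  define U where "U = {v. \<exists>c. v = (\<lambda>x. c * w0 x)}"
  have "inv_subspace S A {2..N} U" unfolding inv_subspace_def csubspace_def
  proof (intro conjI ballI allI)
    show "U \<subseteq> vecs S" using w0 WS by (auto simp: U_def)
    show "(\<lambda>_. 0) \<in> U" unfolding U_def by (rule CollectI, rule exI[of _ 0]) simp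
  next
    fix u v assume "u \<in> U" "v \<in> U"
    then obtain c d where "u = (\<lambda>x. c * w0 x)" "v = (\<lambda>x. d * w0 x)" by (auto simp: U_def)
    then show "(\<lambda>x. u x + v x) \<in> U" unfolding U_def by (intro CollectI exI[of _ "c + d"]) (simp add: algebra_simps)
  next
    fix e u assume "u \<in> U"
    then obtain c where "u = (\<lambda>x. c * w0 x)" by (auto simp: U_def)
    then show "(\<lambda>x. e * u x) \<in> U" unfolding U_def by (intro CollectI exI[of _ "e * c"]) (simp add: algebra_simps)
  next
    fix k u assume "k \<in> {2..N}" "u \<in> U"
    then obtain c where "u = (\<lambda>x. c * w0 x)" by (auto simp: U_def)
    then have "u \<in> W" using csub_scale[OF cW w0(1)] by simp
    then show "act S (A k) u \<in> U" using kill[OF \<open>k \<in> {2..N}\<close>] unfolding U_def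
      by (intro CollectI exI[of _ 0]) simp
  qed
  moreover have "U \<subseteq> W" using csub_scale[OF cW w0(1)] by (auto simp: U_def)
  moreover have "U \<noteq> {\<lambda>_. 0}"
  proof
    assume "U = {\<lambda>_. 0}"
    moreover have "w0 \<in> U" unfolding U_def by (intro CollectI exI[of _ 1]) simp
    ultimately show False using w0 by simp
  qed
  ultimately have UW: "U = W" using Wm by blast
  obtain a where a: "a \<in> S'" using inf by (metis finite.emptyI ex_in_conv)
  have "infinite (S' - {a})" using inf by simp
  then obtain b where b: "b \<in> S' - {a}" by (metis finite.emptyI ex_in_conv)
  then have b: "b \<in> S'" "b \<noteq> a" by auto
  have da: "dl a \<in> vecs S'" and db: "dl b \<in> vecs S'" using a b by (auto intro: dl_vecs)
  obtain ca where ca: "\<phi> (dl a) = (\<lambda>x. ca * w0 x)" using im da UW by (auto simp: U_def)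
  obtain cb where cb: "\<phi> (dl b) = (\<lambda>x. cb * w0 x)" using im db UW by (auto simp: U_def)
  have nz: "\<phi> (dl c) \<noteq> (\<lambda>_. 0)" if "dl c \<in> vecs S'" for c
  proof
    assume "\<phi> (dl c) = (\<lambda>_. 0)"
    then have "\<phi> (dl c) = \<phi> (\<lambda>_. 0)" using lin_zero[OF L] by simp
    then have "dl c = (\<lambda>_. 0)" using inj_onD[OF inj] that by auto
    then have "dl c c = 0" by simp
    then show False by (simp add: dl_def)
  qed
  have "\<phi> (\<lambda>x. cb * dl a x) = \<phi> (\<lambda>x. ca * dl b x)"
    using lin_scale[OF L da, of cb] lin_scale[OF L db, of ca] ca cb by (simp add: mult.left_commute)
  then have "(\<lambda>x. cb * dl a x) = (\<lambda>x. ca * dl b x)" using inj_onD[OF inj] da db by auto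
  then have "cb * dl a a = ca * dl b a" by (rule fun_cong)
  then have "cb = 0" using b by (simp add: dl_def)
  then show False using nz[OF db] cb by simp
qed

lemma T_cl_2: "T_cl h 2 b a = (if b = a then \<i> * qn h (Lval a 2 1) else 0)"
  by (simp add: T_cl_def Ccoef_def Let_def numeral_2_eq_2)

lemma T_nc_2: "T_nc h eps 2 b a = (if b = a then of_int (eps 2) * qp h (Lval a 2 1) else 0)"
  by (simp add: T_nc_def Ccoef_def Let_def numeral_2_eq_2)

lemma act_diag:
  assumes "finite S'" "u \<in> vecs S'"
  shows "act S' (\<lambda>b a. if b = a then f a else 0) u = (\<lambda>b. f b * u b)"
proof (rule ext)
  fix b
  have "(\<Sum>a\<in>S'. (if b = a then f a else 0) * u a) = (\<Sum>a\<in>S'. if b = a then f b * u b else 0)"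
    by (rule sum.cong) auto
  then show "act S' (\<lambda>b a. if b = a then f a else 0) u b = f b * u b"
    using assms by (auto simp: act_def vecs_def)
qed

lemma powi_root:
  fixes h :: complex
  assumes h0: "h \<noteq> 0" and nr: "\<forall>k::nat. k > 0 \<longrightarrow> (h^2)^k \<noteq> 1"
    and p: "h powi m = c" and c4: "c^4 = 1"
  shows "m = 0"
proof (rule ccontr)
  assume m: "m \<noteq> 0"
  have "h powi (m * 4) = (h powi m)^4" using power_int_power'[of h m 4] by simp
  then have "h powi (m * 4) = 1" using p c4 by simp
  then have a: "h powi (4 * m) = 1" by (simp add: mult.commute)
  have "h powi (4 * \<bar>m\<bar>) = 1"
  proof (cases "m \<ge> 0")
    case True then show ?thesis using a by simp
  next
    case False
    then have "4 * \<bar>m\<bar> = - (4 * m)" by simp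
    then show ?thesis using a by (simp add: power_int_minus)
  qed
  moreover have "4 * \<bar>m\<bar> = int (4 * nat \<bar>m\<bar>)" by simp
  ultimately have "h ^ (4 * nat \<bar>m\<bar>) = 1" by (metis power_int_of_nat)
  then have "(h^2) ^ (2 * nat \<bar>m\<bar>) = 1" by (simp add: power_mult[symmetric])
  moreover have "2 * nat \<bar>m\<bar> > 0" using m by simp
  ultimately show False using nr by blast
qed

lemma qn_qp_ne:
  fixes h :: complex
  assumes h0: "h \<noteq> 0" and nr: "\<forall>k::nat. k > 0 \<longrightarrow> (h^2)^k \<noteq> 1" and e: "e = 1 \<or> e = -1"
  shows "\<i> * qn h A \<noteq> of_int e * qp h B"
proof
  assume eq: "\<i> * qn h A = of_int e * qp h B"
  define X where "X = h powi A"
  define Y where "Y = h powi B"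
  have X0: "X \<noteq> 0" and Y0: "Y \<noteq> 0" using h0 by (auto simp: X_def Y_def power_int_not_zero)
  have dn: "h^2 - h powi (-2) \<noteq> 0"
  proof
    assume "h^2 - h powi (-2) = 0"
    then have "h^2 = inverse (h^2)" by (simp add: power_int_minus)
    then have "h^2 * h^2 = 1" using h0 by (metis field_class.field_inverse power_not_zero)
    then have "(h^2)^2 = 1" by (simp add: power2_eq_square)
    then show False using nr[rule_format, of 2] by simp
  qed
  have ee: "(of_int e :: complex) * of_int e = 1" using e by auto
  have "\<i> * (X - inverse X) = of_int e * (Y + inverse Y)"
    using eq dn by (simp add: qn_def qp_def X_def Y_def power_int_minus)
  then have "\<i> * (X - inverse X) * (X * Y) = of_int e * (Y + inverse Y) * (X * Y)" by simp
  moreover have "\<i> * (X - inverse X) * (X * Y) = \<i> * X * X * Y - \<i> * Y"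
    using X0 by (simp add: algebra_simps)
  moreover have "of_int e * (Y + inverse Y) * (X * Y) = of_int e * X * Y * Y + of_int e * X"
    using Y0 by (simp add: algebra_simps)
  ultimately have "\<i> * X * X * Y - \<i> * Y = of_int e * X * Y * Y + of_int e * X" by simp
  then have "(\<i> * X - of_int e * Y) * (X * Y + of_int e * \<i>) = 0"
    using ee by (simp add: algebra_simps)
  then have "\<i> * X - of_int e * Y = 0 \<or> X * Y + of_int e * \<i> = 0" by (simp only: mult_eq_0_iff)
  then have "\<i> * X = of_int e * Y \<or> X * Y = - (of_int e * \<i>)"
  proof
    assume "\<i> * X - of_int e * Y = 0" then show ?thesis by simp
  next
    assume "X * Y + of_int e * \<i> = 0" then have "X * Y = - (of_int e * \<i>)" by (simp add: eq_neg_iff_add_eq_0)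
    then show ?thesis by simp
  qed
  then show False
  proof
    assume a: "\<i> * X = of_int e * Y"
    have "X = - (\<i> * (\<i> * X))" by simp
    then have "X = - (\<i> * (of_int e * Y))" using a by simp
    then have "X / Y = - (of_int e * \<i>)" using Y0 by (simp add: field_simps)
    then have "h powi (A - B) = - (of_int e * \<i>)" using h0 by (simp add: X_def Y_def power_int_diff)
    moreover have "(- (of_int e * \<i> :: complex))^4 = 1" using e by auto
    ultimately have "A - B = 0" using powi_root[OF h0 nr] by blast
    then have "X = Y" by (simp add: X_def Y_def)
    then have "\<i> = of_int e" using a X0 by simp
    then show False using e by (auto simp: complex_eq_iff)
  next
    assume a: "X * Y = - (of_int e * \<i>)"
    then have "h powi (A + B) = - (of_int e * \<i>)" using h0 by (simp add: X_def Y_def power_int_add)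
    moreover have "(- (of_int e * \<i> :: complex))^4 = 1" using e by auto
    ultimately have "A + B = 0" using powi_root[OF h0 nr] by blast
    then have "h powi (A + B) = 1" by simp
    then show False using \<open>h powi (A + B) = - (of_int e * \<i>)\<close> e by (auto simp: complex_eq_iff)
  qed
qed

theorem proposition3:
  fixes h :: complex and n :: nat and S :: "nat set" and \<rho> :: "nat \<Rightarrow> nat \<Rightarrow> nat \<Rightarrow> complex"
  assumes "h \<noteq> 0"
    and "\<forall>k::nat. k > 0 \<longrightarrow> (h^2)^k \<noteq> 1"
    and "n \<ge> 4"
    and "hypA h (n - 1)"
    and "is_rep h n S \<rho>"
    and "irred_sub S \<rho> {2..n} (vecs S)"
  shows "\<exists>r W. irred_decomp S \<rho> {2..n-1} r W \<and>
           ((\<forall>i<r. classical_type h (n-1) S \<rho> (W i)) \<or>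
            (\<forall>i<r. nonclassical_type h (n-1) S \<rho> (W i)))"
proof -
  note h0 = assms(1) and nr = assms(2) and n4 = assms(3) and hA = assms(4) and rep = assms(5)
    and irr = assms(6)
  have repN: "is_rep h (n-1) S \<rho>" using is_rep_restrict[OF rep] .
  have finS: "finite S" using rep by (simp add: is_rep_def)
  obtain r W where dec: "irred_decomp S \<rho> {2..n-1} r W"
    using hA repN unfolding hypA_def completely_reducible_def by blast
  have Wirr: "\<And>i. i < r \<Longrightarrow> irred_sub S \<rho> {2..n-1} (W i)"
    and ex1: "\<And>v. v \<in> vecs S \<Longrightarrow> \<exists>!w. (\<forall>i<r. w i \<in> W i) \<and> (\<forall>i\<ge>r. w i = (\<lambda>_. 0)) \<and> v = (\<lambda>x. \<Sum>i<r. w i x)"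
    using dec unfolding irred_decomp_def by blast+
  have Winv: "\<And>i. i < r \<Longrightarrow> inv_subspace S \<rho> {2..n-1} (W i)" using Wirr by (simp add: irred_sub_def)
  have cW: "\<And>i. i < r \<Longrightarrow> csubspace (W i)" using Winv by (simp add: inv_subspace_def)
  have WS: "\<And>i. i < r \<Longrightarrow> W i \<subseteq> vecs S" using Winv by (simp add: inv_subspace_def)
  have Wk: "\<And>i k w. i < r \<Longrightarrow> k \<in> {2..n-1} \<Longrightarrow> w \<in> W i \<Longrightarrow> act S (\<rho> k) w \<in> W i"
    using Winv unfolding inv_subspace_def by blast
  have Wne: "\<And>i. i < r \<Longrightarrow> \<exists>w0\<in>W i. w0 \<noteq> (\<lambda>_. 0)"
  proof -
    fix i assume i: "i < r"
    have "W i \<noteq> {\<lambda>_. 0}" using Wirr[OF i] by (simp add: irred_sub_def)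
    then show "\<exists>w0\<in>W i. w0 \<noteq> (\<lambda>_. 0)" using csub_zero[OF cW[OF i]] by blast
  qed
  define fam where "fam w \<longleftrightarrow> (\<forall>i<r. w i \<in> W i) \<and> (\<forall>i\<ge>r. w i = (\<lambda>_. 0))" for w :: "nat \<Rightarrow> nat \<Rightarrow> complex"
  have famS: "(\<lambda>x. \<Sum>i<r. w i x) \<in> vecs S" if "fam w" for w
    using that WS by (auto simp: fam_def intro!: vecs_sum)
  have dec_eq: "w = w'" if "fam w" "fam w'" "(\<lambda>x. \<Sum>i<r. w i x) = (\<lambda>x. \<Sum>i<r. w' i x)" for w w'
    using ex1[OF famS[OF that(1)]] that unfolding fam_def by blast
  have dec_ex: "\<exists>w. fam w \<and> v = (\<lambda>x. \<Sum>i<r. w i x)" if "v \<in> vecs S" for v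
    using ex1[OF that] unfolding fam_def by blast
  define cls where "cls i \<longleftrightarrow> classical_type h (n-1) S \<rho> (W i)" for i
  define ncl where "ncl i \<longleftrightarrow> nonclassical_type h (n-1) S \<rho> (W i)" for i
  have types: "\<And>i. i < r \<Longrightarrow> cls i \<or> ncl i"
    unfolding cls_def ncl_def using component_type[OF finS repN hA Wirr] by blast
  have two: "2 \<in> {2..n-1}" using n4 by simp
  define Vc where "Vc = {v. \<exists>w. fam w \<and> (\<forall>i<r. \<not> cls i \<longrightarrow> w i = (\<lambda>_. 0)) \<and> v = (\<lambda>x. \<Sum>i<r. w i x)}"
  have VcS: "Vc \<subseteq> vecs S" using famS by (auto simp: Vc_def)
  have cVc: "csubspace Vc" unfolding csubspace_def
  proof (intro conjI ballI allI)
    show "(\<lambda>_. 0) \<in> Vc" unfolding Vc_def fam_def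
      by (intro CollectI exI[of _ "\<lambda>i x. 0"]) (auto intro: csub_zero[OF cW])
  next
    fix u v assume "u \<in> Vc" "v \<in> Vc"
    then obtain wu wv where u: "fam wu" "\<forall>i<r. \<not> cls i \<longrightarrow> wu i = (\<lambda>_. 0)" "u = (\<lambda>x. \<Sum>i<r. wu i x)"
      and v: "fam wv" "\<forall>i<r. \<not> cls i \<longrightarrow> wv i = (\<lambda>_. 0)" "v = (\<lambda>x. \<Sum>i<r. wv i x)"
      unfolding Vc_def by blast
    show "(\<lambda>x. u x + v x) \<in> Vc" unfolding Vc_def
    proof (intro CollectI exI[of _ "\<lambda>i x. wu i x + wv i x"] conjI)
      show "fam (\<lambda>i x. wu i x + wv i x)" using u(1) v(1) unfolding fam_def
        by (auto intro: csub_add[OF cW])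
      show "\<forall>i<r. \<not> cls i \<longrightarrow> (\<lambda>x. wu i x + wv i x) = (\<lambda>_. 0)" using u(2) v(2) by auto
      show "(\<lambda>x. u x + v x) = (\<lambda>x. \<Sum>i<r. wu i x + wv i x)" using u(3) v(3) by (simp add: sum.distrib)
    qed
  next
    fix c u assume "u \<in> Vc"
    then obtain wu where u: "fam wu" "\<forall>i<r. \<not> cls i \<longrightarrow> wu i = (\<lambda>_. 0)" "u = (\<lambda>x. \<Sum>i<r. wu i x)"
      unfolding Vc_def by blast
    show "(\<lambda>x. c * u x) \<in> Vc" unfolding Vc_def
    proof (intro CollectI exI[of _ "\<lambda>i x. c * wu i x"] conjI)
      show "fam (\<lambda>i x. c * wu i x)" using u(1) unfolding fam_def
        by (auto intro: csub_scale[OF cW])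
      show "\<forall>i<r. \<not> cls i \<longrightarrow> (\<lambda>x. c * wu i x) = (\<lambda>_. 0)" using u(2) by auto
      show "(\<lambda>x. c * u x) = (\<lambda>x. \<Sum>i<r. c * wu i x)" using u(3) by (simp add: sum_distrib_left)
    qed
  qed
  have eig: "y \<in> Vc" if yS: "y \<in> vecs S" and ey: "act S (\<rho> 2) y = (\<lambda>x. (\<i> * qn h A) * y x)" for y A
  proof -
    define lam where "lam = \<i> * qn h A"
    obtain w where w: "fam w" "y = (\<lambda>x. \<Sum>i<r. w i x)" using dec_ex[OF yS] by blast
    have fa: "fam (\<lambda>j. act S (\<rho> 2) (w j))" using w(1) Wk[OF _ two] unfolding fam_def by auto
    have fb: "fam (\<lambda>j x. lam * w j x)" using w(1) csub_scale[OF cW] unfolding fam_def by auto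
    have "(\<lambda>x. \<Sum>j<r. act S (\<rho> 2) (w j) x) = act S (\<rho> 2) y" using w(2) by (simp add: act_sum)
    also have "\<dots> = (\<lambda>x. \<Sum>j<r. lam * w j x)" using ey w(2) by (simp add: lam_def sum_distrib_left)
    finally have "(\<lambda>j. act S (\<rho> 2) (w j)) = (\<lambda>j x. lam * w j x)" using dec_eq[OF fa fb] by blast
    then have ew: "\<And>j. act S (\<rho> 2) (w j) = (\<lambda>x. lam * w j x)" by metis
    have "w j = (\<lambda>_. 0)" if j: "j < r" "\<not> cls j" for j
    proof -
      have "ncl j" using types[OF j(1)] j(2) by blast
      then obtain eps M where eps: "eps_ok (n-1) eps"
        and eq: "equiv_sub S \<rho> (W j) (n-1) (GT_nc (n-1) M) (T_nc h eps)"
        unfolding ncl_def nonclassical_type_def by blast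
      define S' where "S' = GT_nc (n-1) M"
      have finS': "finite S'" using equiv_fin[OF eq Wirr[OF j(1)]] by (simp add: S'_def)
      obtain \<phi> where p1: "\<forall>u\<in>vecs S'. \<forall>v\<in>vecs S'. \<phi> (\<lambda>x. u x + v x) = (\<lambda>x. \<phi> u x + \<phi> v x)"
        and p2: "\<forall>c. \<forall>u\<in>vecs S'. \<phi> (\<lambda>x. c * u x) = (\<lambda>x. c * \<phi> u x)"
        and p3: "bij_betw \<phi> (vecs S') (W j)"
        and p4: "\<forall>k\<in>{2..n-1}. \<forall>u\<in>vecs S'. \<phi> (act S' (T_nc h eps k) u) = act S (\<rho> k) (\<phi> u)"
        using eq unfolding equiv_sub_def S'_def by blast
      have L: "lin_on S' \<phi>" using p1 p2 by (simp add: lin_on_def)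
      have inj: "inj_on \<phi> (vecs S')" and im: "\<phi> ` vecs S' = W j" using p3 by (auto simp: bij_betw_def)
      obtain z where z: "z \<in> vecs S'" "w j = \<phi> z" using w(1) j(1) im unfolding fam_def by (metis imageE)
      define f where "f a = of_int (eps 2) * qp h (Lval a 2 1)" for a
      have Tf: "T_nc h eps 2 = (\<lambda>b a. if b = a then f a else 0)" by (simp add: fun_eq_iff T_nc_2 f_def)
      have "\<phi> (act S' (T_nc h eps 2) z) = act S (\<rho> 2) (\<phi> z)" using p4 two z(1) by blast
      also have "\<dots> = (\<lambda>x. lam * \<phi> z x)" using ew[of j] z(2) by simp
      also have "\<dots> = \<phi> (\<lambda>x. lam * z x)" using lin_scale[OF L z(1)] by simp
      finally have "act S' (T_nc h eps 2) z = (\<lambda>x. lam * z x)"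
        using inj_onD[OF inj] z(1) by auto
      then have fz: "(\<lambda>b. f b * z b) = (\<lambda>x. lam * z x)" using act_diag[OF finS' z(1)] Tf by simp
      have e2: "eps 2 = 1 \<or> eps 2 = -1" using eps two by (simp add: eps_ok_def)
      have "z = (\<lambda>_. 0)"
      proof (rule ext)
        fix s
        have "f s * z s = lam * z s" using fz by metis
        moreover have "f s \<noteq> lam" using qn_qp_ne[OF h0 nr e2, of A "Lval s 2 1"] by (simp add: f_def lam_def)
        ultimately show "z s = 0" by simp
      qed
      then show "w j = (\<lambda>_. 0)" using z(2) lin_zero[OF L] by simp
    qed
    then show "y \<in> Vc" unfolding Vc_def using w by blast
  qed
  have key: "act S (\<rho> n) v \<in> Vc" if i: "i < r" "cls i" and v: "v \<in> W i" for i v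
  proof -
    obtain M where eq: "equiv_sub S \<rho> (W i) (n-1) (GT_cl (n-1) M) (T_cl h)"
      using i(2) unfolding cls_def classical_type_def by blast
    define S' where "S' = GT_cl (n-1) M"
    have finS': "finite S'" using equiv_fin[OF eq Wirr[OF i(1)]] by (simp add: S'_def)
    obtain \<phi> where p1: "\<forall>u\<in>vecs S'. \<forall>v\<in>vecs S'. \<phi> (\<lambda>x. u x + v x) = (\<lambda>x. \<phi> u x + \<phi> v x)"
      and p2: "\<forall>c. \<forall>u\<in>vecs S'. \<phi> (\<lambda>x. c * u x) = (\<lambda>x. c * \<phi> u x)"
      and p3: "bij_betw \<phi> (vecs S') (W i)"
      and p4: "\<forall>k\<in>{2..n-1}. \<forall>u\<in>vecs S'. \<phi> (act S' (T_cl h k) u) = act S (\<rho> k) (\<phi> u)"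
      using eq unfolding equiv_sub_def S'_def by blast
    have L: "lin_on S' \<phi>" using p1 p2 by (simp add: lin_on_def)
    have im: "\<phi> ` vecs S' = W i" using p3 by (auto simp: bij_betw_def)
    obtain u where u: "u \<in> vecs S'" "v = \<phi> u" using v im by (metis imageE)
    have comm: "act S (\<rho> 2) (act S (\<rho> n) x) = act S (\<rho> n) (act S (\<rho> 2) x)" if "x \<in> vecs S" for x
    proof -
      have "\<forall>i\<in>{2..n}. \<forall>j\<in>{2..n}. (i > j + 1 \<or> j > i + 1) \<longrightarrow>
         (\<forall>v\<in>vecs S. act S (\<rho> i) (act S (\<rho> j) v) = act S (\<rho> j) (act S (\<rho> i) v))"
        using rep unfolding is_rep_def by blast
      moreover have "(2::nat) \<in> {2..n}" "n \<in> {2..n}" "n > 2 + 1" using n4 by auto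
      ultimately show ?thesis using that by blast
    qed
    have base: "act S (\<rho> n) (\<phi> (dl t)) \<in> Vc" if t: "t \<in> S'" for t
    proof -
      define c where "c = \<i> * qn h (Lval t 2 1)"
      have dt: "dl t \<in> vecs S'" using t by (rule dl_vecs)
      have vt: "\<phi> (dl t) \<in> vecs S" using dt im WS[OF i(1)] by blast
      have Tc: "T_cl h 2 = (\<lambda>b a. if b = a then \<i> * qn h (Lval a 2 1) else 0)"
        by (simp add: fun_eq_iff T_cl_2)
      have "act S' (T_cl h 2) (dl t) = (\<lambda>b. \<i> * qn h (Lval b 2 1) * dl t b)"
        using act_diag[OF finS' dt] Tc by simp
      also have "\<dots> = (\<lambda>b. c * dl t b)" by (rule ext) (simp add: dl_def c_def)
      finally have "act S (\<rho> 2) (\<phi> (dl t)) = \<phi> (\<lambda>b. c * dl t b)" using p4 two dt by metis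
      also have "\<dots> = (\<lambda>x. c * \<phi> (dl t) x)" using lin_scale[OF L dt] .
      finally have e2: "act S (\<rho> 2) (\<phi> (dl t)) = (\<lambda>x. c * \<phi> (dl t) x)" .
      have "act S (\<rho> 2) (act S (\<rho> n) (\<phi> (dl t))) = act S (\<rho> n) (\<lambda>x. c * \<phi> (dl t) x)"
        using comm[OF vt] e2 by simp
      also have "\<dots> = (\<lambda>x. c * act S (\<rho> n) (\<phi> (dl t)) x)" by (rule act_scale)
      finally show ?thesis using eig[OF act_vecs] unfolding c_def by blast
    qed
    have "\<phi> u = \<phi> (\<lambda>x. \<Sum>a\<in>S'. u a * dl a x)" using arg_cong[OF vecs_expand[OF finS' u(1)], of \<phi>] .
    also have "\<dots> = (\<lambda>x. \<Sum>a\<in>S'. \<phi> (\<lambda>y. u a * dl a y) x)"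
      by (rule lin_sum[OF L]) (simp add: vecs_scale dl_vecs)
    also have "\<dots> = (\<lambda>x. \<Sum>a\<in>S'. u a * \<phi> (dl a) x)"
      using lin_scale[OF L dl_vecs] by simp
    finally have "act S (\<rho> n) v = act S (\<rho> n) (\<lambda>x. \<Sum>a\<in>S'. u a * \<phi> (dl a) x)" using u(2) by simp
    also have "\<dots> = (\<lambda>x. \<Sum>a\<in>S'. act S (\<rho> n) (\<lambda>y. u a * \<phi> (dl a) y) x)" by (rule act_sum)
    also have "\<dots> = (\<lambda>x. \<Sum>a\<in>S'. u a * act S (\<rho> n) (\<phi> (dl a)) x)" by (simp add: act_scale)
    finally have av: "act S (\<rho> n) v = (\<lambda>x. \<Sum>a\<in>S'. u a * act S (\<rho> n) (\<phi> (dl a)) x)" .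
    have "(\<lambda>x. \<Sum>a\<in>S'. (\<lambda>y. u a * act S (\<rho> n) (\<phi> (dl a)) y) x) \<in> Vc"
      by (rule csub_sum[OF cVc]) (rule csub_scale[OF cVc base])
    then show ?thesis using av by simp
  qed
  have invVc: "inv_subspace S \<rho> {2..n} Vc" unfolding inv_subspace_def
  proof (intro conjI ballI)
    show "Vc \<subseteq> vecs S" by (rule VcS)
    show "csubspace Vc" by (rule cVc)
  next
    fix k v assume k: "k \<in> {2..n}" and v: "v \<in> Vc"
    then obtain w where w: "fam w" "\<forall>i<r. \<not> cls i \<longrightarrow> w i = (\<lambda>_. 0)" "v = (\<lambda>x. \<Sum>i<r. w i x)"
      unfolding Vc_def by blast
    have av: "act S (\<rho> k) v = (\<lambda>x. \<Sum>i<r. act S (\<rho> k) (w i) x)" using w(3) by (simp add: act_sum)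
    show "act S (\<rho> k) v \<in> Vc"
    proof (cases "k = n")
      case True
      have "act S (\<rho> k) (w i) \<in> Vc" if "i \<in> {..<r}" for i
      proof (cases "cls i")
        case True then show ?thesis using key[of i "w i"] w(1) that \<open>k = n\<close> by (auto simp: fam_def)
      next
        case False then show ?thesis using w(2) that csub_zero[OF cVc] by auto
      qed
      then have "(\<lambda>x. \<Sum>i\<in>{..<r}. act S (\<rho> k) (w i) x) \<in> Vc" by (rule csub_sum[OF cVc])
      then show ?thesis using av by simp
    next
      case False
      then have k': "k \<in> {2..n-1}" using k by auto
      show ?thesis unfolding Vc_def
      proof (intro CollectI exI[of _ "\<lambda>i. act S (\<rho> k) (w i)"] conjI)
        show "fam (\<lambda>i. act S (\<rho> k) (w i))" using w(1) Wk[OF _ k'] by (auto simp: fam_def)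
        show "\<forall>i<r. \<not> cls i \<longrightarrow> act S (\<rho> k) (w i) = (\<lambda>_. 0)" using w(2) by auto
        show "act S (\<rho> k) v = (\<lambda>x. \<Sum>i<r. act S (\<rho> k) (w i) x)" by (rule av)
      qed
    qed
  qed
  have Vc_cases: "Vc = {\<lambda>_. 0} \<or> Vc = vecs S"
    using irr invVc VcS unfolding irred_sub_def by blast
  have single: "fam (\<lambda>i x. if i = j then w0 x else 0) \<and> (\<lambda>x. \<Sum>i<r. (if i = j then w0 x else 0)) = w0"
    if "j < r" "w0 \<in> W j" for j w0
  proof -
    have e: "\<And>i. (\<lambda>x. if i = j then w0 x else 0) = (if i = j then w0 else (\<lambda>_. 0))" by auto
    have "fam (\<lambda>i x. if i = j then w0 x else 0)" unfolding fam_def e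
    proof (intro conjI allI impI)
      fix i assume "i < r" then show "(if i = j then w0 else (\<lambda>_. 0)) \<in> W i"
        using that csub_zero[OF cW] by simp
    next
      fix i assume "r \<le> i" then show "(if i = j then w0 else (\<lambda>_. 0)) = (\<lambda>_. 0)" using that by simp
    qed
    moreover have "(\<lambda>x. \<Sum>i<r. (if i = j then w0 x else 0)) = w0"
    proof (rule ext)
      fix x show "(\<Sum>i<r. (if i = j then w0 x else 0)) = w0 x" using that by simp
    qed
    ultimately show ?thesis by blast
  qed
  have "(\<forall>i<r. cls i) \<or> (\<forall>i<r. ncl i)"
  proof (rule ccontr)
    assume "\<not> ((\<forall>i<r. cls i) \<or> (\<forall>i<r. ncl i))"
    then obtain i0 j0 where i0: "i0 < r" "\<not> cls i0" and j0: "j0 < r" "\<not> ncl j0" by blast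
    have cj0: "cls j0" using types[OF j0(1)] j0(2) by blast
    from Vc_cases show False
    proof
      assume V0: "Vc = {\<lambda>_. 0}"
      obtain w0 where w0: "w0 \<in> W j0" "w0 \<noteq> (\<lambda>_. 0)" using Wne[OF j0(1)] by blast
      have "w0 \<in> Vc" unfolding Vc_def
      proof (intro CollectI exI[of _ "\<lambda>i x. if i = j0 then w0 x else 0"] conjI allI impI)
        show "fam (\<lambda>i x. if i = j0 then w0 x else 0)" using single[OF j0(1) w0(1)] by blast
        show "w0 = (\<lambda>x. \<Sum>i<r. (if i = j0 then w0 x else 0))" using single[OF j0(1) w0(1)] by simp
      next
        fix i assume "i < r" "\<not> cls i"
        then have "i \<noteq> j0" using cj0 by blast
        then show "(\<lambda>x. if i = j0 then w0 x else 0) = (\<lambda>_. 0)" by simp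
      qed
      then show False using V0 w0(2) by simp
    next
      assume V1: "Vc = vecs S"
      obtain w0 where w0: "w0 \<in> W i0" "w0 \<noteq> (\<lambda>_. 0)" using Wne[OF i0(1)] by blast
      have "w0 \<in> Vc" using V1 w0(1) WS[OF i0(1)] by blast
      then obtain w where w: "fam w" "\<forall>i<r. \<not> cls i \<longrightarrow> w i = (\<lambda>_. 0)" "w0 = (\<lambda>x. \<Sum>i<r. w i x)"
        unfolding Vc_def by blast
      have s: "fam (\<lambda>i x. if i = i0 then w0 x else 0)" "(\<lambda>x. \<Sum>i<r. (if i = i0 then w0 x else 0)) = w0"
        using single[OF i0(1) w0(1)] by blast+
      have "w = (\<lambda>i x. if i = i0 then w0 x else 0)" using dec_eq[OF w(1) s(1) trans[OF w(3)[symmetric] s(2)[symmetric]]] .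
      then have "w i0 = w0" by simp
      then show False using w(2) i0 w0(2) by simp
    qed
  qed
  then show ?thesis using dec unfolding cls_def ncl_def by blast
qed

end
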